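(* The elements of $\mathcal{R}$ with small support generate $\mathcal{R}$, and $\mathcal{R}=[\mathcal{R},\mathcal{R}]$.
   Context: $\mathcal{R}$ is the group of rational homeomorphisms of $\{0,1\}^\omega$: those $f$ for which there is a finite asynchronous binary transducer $(S,s_0,t,o)$ ($S$ finite, $t\colon S\times\{0,1\}\to S$, $o\colon S\times\{0,1\}\to\{0,1\}^*$) with $f(\psi)=o(s_0,\psi)$, where for $\sigma_1\sigma_2\cdots$ one sets $s_1=s_0$, $s_{n+1}=t(s_n,\sigma_n)$ and $o(s_0,\sigma_1\sigma_2\cdots)=o(s_1,\sigma_1)o(s_2,\sigma_2)\cdots$. An element $f$ has small support if there is a proper nonempty clopen subset $E\subseteq\{0,1\}^\omega$ such that $f$ is the identity on the complement of $E$. *)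

theory Defs
  imports "HOL-Analysis.Analysis" "HOL-Algebra.Algebra"
begin

text \<open>Cantor space {0,1}^omega is modelled as nat => bool (False = 0, True = 1)
  with the product topology (instance from Function_Topology; bool carries the discrete
  order topology).\<close>

type_synonym cantor = "nat \<Rightarrow> bool"

text \<open>A finite asynchronous binary transducer: states are the naturals below k,
  start state s0, transition t, output o (finite binary words = bool lists).\<close>

fun trans_state :: "(nat \<Rightarrow> bool \<Rightarrow> nat) \<Rightarrow> nat \<Rightarrow> cantor \<Rightarrow> nat \<Rightarrow> nat" where
  "trans_state t s0 x 0 = s0"
| "trans_state t s0 x (Suc n) = t (trans_state t s0 x n) (x n)"

definition trans_out_prefix ::
  "(nat \<Rightarrow> bool \<Rightarrow> nat) \<Rightarrow> (nat \<Rightarrow> bool \<Rightarrow> bool list) \<Rightarrow> nat \<Rightarrow> cantor \<Rightarrow> nat \<Rightarrow> bool list" where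
  "trans_out_prefix t out s0 x n = concat (map (\<lambda>i. out (trans_state t s0 x i) (x i)) [0..<n])"

text \<open>The infinite word o(s0,x) equals y: every finite partial output is a prefix of y
  and the partial outputs have unbounded length (so the output is an infinite word).\<close>
definition trans_output_is ::
  "(nat \<Rightarrow> bool \<Rightarrow> nat) \<Rightarrow> (nat \<Rightarrow> bool \<Rightarrow> bool list) \<Rightarrow> nat \<Rightarrow> cantor \<Rightarrow> cantor \<Rightarrow> bool" where
  "trans_output_is t out s0 x y \<longleftrightarrow>
     (\<forall>n. \<forall>i < length (trans_out_prefix t out s0 x n). trans_out_prefix t out s0 x n ! i = y i)
   \<and> (\<forall>m. \<exists>n. m \<le> length (trans_out_prefix t out s0 x n))"

definition rational_map :: "(cantor \<Rightarrow> cantor) \<Rightarrow> bool" where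
  "rational_map f \<longleftrightarrow>
     (\<exists>(k::nat) (s0::nat) t out. s0 < k \<and> (\<forall>s < k. \<forall>a. t s a < k)
        \<and> (\<forall>x. trans_output_is t out s0 x (f x)))"

definition rational_homeos :: "(cantor \<Rightarrow> cantor) set" where
  "rational_homeos = {f. (\<exists>g. homeomorphism UNIV UNIV f g) \<and> rational_map f}"

definition RG :: "(cantor \<Rightarrow> cantor) monoid" where
  "RG = \<lparr>carrier = rational_homeos, mult = (\<circ>), one = id\<rparr>"

definition small_support :: "(cantor \<Rightarrow> cantor) \<Rightarrow> bool" where
  "small_support f \<longleftrightarrow>
     (\<exists>E :: cantor set. open E \<and> closed E \<and> E \<noteq> {} \<and> E \<noteq> UNIV \<and> (\<forall>x. x \<notin> E \<longrightarrow> f x = x))"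

end

theory Submission
  imports Defs
begin

definition agree :: "nat \<Rightarrow> cantor \<Rightarrow> cantor \<Rightarrow> bool" where
  "agree n x y \<longleftrightarrow> (\<forall>i<n. x i = y i)"

lemma open_agree: "open {y. agree n x y}"
proof -
  have "open {f::cantor. \<forall>i\<in>{..<n}. f (id i) \<in> {x i}}"
    by (rule product_topology_basis') (auto simp: open_discrete)
  moreover have "{f::cantor. \<forall>i\<in>{..<n}. f (id i) \<in> {x i}} = {y. agree n x y}"
    by (auto simp: agree_def)
  ultimately show ?thesis by simp
qed

lemma open_nbhd:
  assumes "open U" "x \<in> U" shows "\<exists>n. {y. agree n x y} \<subseteq> U"
proof -
  have "openin (product_topology (\<lambda>i. euclidean) UNIV) U"
    using assms(1) by (simp add: open_fun_def)
  then obtain V where V: "finite {i. V i \<noteq> (UNIV::bool set)}" "x \<in> Pi\<^sub>E UNIV V" "Pi\<^sub>E UNIV V \<subseteq> U"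
    using assms(2) unfolding openin_product_topology_alt by force
  obtain n where n: "\<forall>i\<in>{i. V i \<noteq> UNIV}. i < n"
    using V(1) by (metis finite_nat_set_iff_bounded)
  have "{y. agree n x y} \<subseteq> Pi\<^sub>E UNIV V"
  proof
    fix y assume "y \<in> {y. agree n x y}"
    then have "\<forall>i. y i \<in> V i"
    proof (intro allI)
      fix i assume a: "y \<in> {y. agree n x y}"
      show "y i \<in> V i"
      proof (cases "V i = UNIV")
        case False
        then have "i < n" using n by blast
        then have "y i = x i" using a by (simp add: agree_def)
        then show ?thesis using V(2) by (auto simp: PiE_iff)
      qed simp
    qed
    then show "y \<in> Pi\<^sub>E UNIV V" by (auto simp: PiE_iff)
  qed
  then show ?thesis using V(3) by blast
qed

lemma compact_cantor: "compact (UNIV :: cantor set)"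
proof -
  have "compact_space (euclidean::bool topology)" by (simp add: compact_space_def finite_imp_compact)
  then have "compact_space (product_topology (\<lambda>i::nat. (euclidean :: bool topology)) UNIV)"
    by (simp add: compact_space_product_topology)
  then show ?thesis
    by (simp add: euclidean_product_topology compact_space_def)
qed

lemma cont_vimage: "continuous_on UNIV g \<Longrightarrow> open B \<Longrightarrow> open (g -` B)"
  by (metis continuous_on_open_vimage[OF open_UNIV] Int_UNIV_right)

lemma unif_cont:
  assumes "continuous_on UNIV (g :: cantor \<Rightarrow> cantor)"
  shows "\<exists>M. \<forall>x y. agree M x y \<longrightarrow> agree N (g x) (g y)"
proof -
  have "\<exists>m. {y. agree m x y} \<subseteq> {y. agree N (g x) (g y)}" for x
  proof -
    have "open (g -` {z. agree N (g x) z})"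
      using assms open_agree by (rule cont_vimage)
    moreover have "x \<in> g -` {z. agree N (g x) z}" by (simp add: agree_def)
    ultimately obtain m where "{y. agree m x y} \<subseteq> g -` {z. agree N (g x) z}"
      using open_nbhd by blast
    then show ?thesis by auto
  qed
  then obtain m where m: "\<And>x. {y. agree (m x) x y} \<subseteq> {y. agree N (g x) (g y)}" by metis
  have cov: "UNIV \<subseteq> (\<Union>x\<in>UNIV. {y. agree (m x) x y})" by (auto simp: agree_def)
  obtain F where F: "finite F" "UNIV \<subseteq> (\<Union>x\<in>F. {y. agree (m x) x y})"
  proof -
    from compactE_image[OF compact_cantor _ cov]
    obtain C' where "C' \<subseteq> UNIV" "finite C'" "UNIV \<subseteq> (\<Union>x\<in>C'. {y. agree (m x) x y})"
      using open_agree by blast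
    then show ?thesis using that by blast
  qed
  define M where "M = Max (m ` F)"
  show ?thesis
  proof (intro exI allI impI)
    fix x y assume xy: "agree M x y"
    obtain z where z: "z \<in> F" "agree (m z) z x" using F(2) by blast
    have "m z \<le> M" using F(1) z(1) by (simp add: M_def)
    then have "agree (m z) z y" using xy z(2) by (auto simp: agree_def)
    then have "agree N (g z) (g x)" "agree N (g z) (g y)" using m[of z] z(2) by auto
    then show "agree N (g x) (g y)" by (auto simp: agree_def)
  qed
qed

lemma locconst_cont:
  assumes "\<And>x i. \<exists>n. \<forall>y. agree n x y \<longrightarrow> g y i = g x i"
  shows "continuous_on UNIV (g :: cantor \<Rightarrow> cantor)"
proof (rule continuous_on_coordinatewise_then_product)
  fix i
  have "open ((\<lambda>x. g x i) -` B)" for B :: "bool set"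
  proof (rule iffD2[OF open_subopen], intro ballI)
    fix x assume x: "x \<in> (\<lambda>x. g x i) -` B"
    obtain n where n: "\<forall>y. agree n x y \<longrightarrow> g y i = g x i" using assms by blast
    have "{y. agree n x y} \<subseteq> (\<lambda>x. g x i) -` B"
    proof
      fix y assume "y \<in> {y. agree n x y}"
      then have "g y i = g x i" using n by blast
      then show "y \<in> (\<lambda>x. g x i) -` B" using x by simp
    qed
    moreover have "x \<in> {y. agree n x y}" by (simp add: agree_def)
    ultimately show "\<exists>T. open T \<and> x \<in> T \<and> T \<subseteq> (\<lambda>x. g x i) -` B"
      using open_agree[of n x] by blast
  qed
  then show "continuous_on UNIV (\<lambda>x. g x i)"
    by (simp add: continuous_on_open_vimage[OF open_UNIV])
qed

fun lout :: "('s \<Rightarrow> bool \<Rightarrow> 's) \<Rightarrow> ('s \<Rightarrow> bool \<Rightarrow> bool list) \<Rightarrow> 's \<Rightarrow> bool list \<Rightarrow> bool list" where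
  "lout t out s [] = []"
| "lout t out s (a # v) = out s a @ lout t out (t s a) v"

definition pre :: "cantor \<Rightarrow> nat \<Rightarrow> bool list" where
  "pre x n = map x [0..<n]"

definition prefixof :: "bool list \<Rightarrow> cantor \<Rightarrow> bool" where
  "prefixof l y \<longleftrightarrow> (\<forall>i<length l. l ! i = y i)"

definition computes :: "('s \<Rightarrow> bool \<Rightarrow> 's) \<Rightarrow> ('s \<Rightarrow> bool \<Rightarrow> bool list) \<Rightarrow> 's \<Rightarrow> (cantor \<Rightarrow> cantor) \<Rightarrow> bool" where
  "computes t out s f \<longleftrightarrow> (\<forall>x. (\<forall>n. prefixof (lout t out s (pre x n)) (f x))
      \<and> (\<forall>m. \<exists>n. m \<le> length (lout t out s (pre x n))))"

lemma pre_Suc: "pre x (Suc n) = pre x n @ [x n]"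
  by (simp add: pre_def)

lemma length_pre[simp]: "length (pre x n) = n"
  by (simp add: pre_def)

lemma nth_pre[simp]: "i < n \<Longrightarrow> pre x n ! i = x i"
  by (simp add: pre_def)

lemma pre_0[simp]: "pre x 0 = []"
  by (simp add: pre_def)

lemma lout_append: "lout t out s (v @ w) = lout t out s v @ lout t out (foldl t s v) w"
  by (induction v arbitrary: s) auto

lemma lout_snoc: "lout t out s (v @ [a]) = lout t out s v @ out (foldl t s v) a"
  by (simp add: lout_append)

lemma prefixof_pre: "prefixof l y \<Longrightarrow> l = pre y (length l)"
  by (simp add: prefixof_def list_eq_iff_nth_eq)

lemma prefixof_pre_iff: "prefixof (pre y n) y"
  by (simp add: prefixof_def)

lemma pre_le_append: assumes "m \<le> m'" shows "\<exists>w. pre y m' = pre y m @ w"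
proof -
  have "[0..<m'] = [0..<m] @ [m..<m']" using upt_add_eq_append[of 0 m "m'-m"] assms by simp
  then have "pre y m' = pre y m @ map y [m..<m']" by (simp add: pre_def)
  then show ?thesis by blast
qed

lemma lout_pre_mono: "m \<le> m' \<Longrightarrow> length (lout t out s (pre y m)) \<le> length (lout t out s (pre y m'))"
  using pre_le_append[of m m' y] by (auto simp: lout_append)

lemma trans_state_eq: "trans_state t s x n = foldl t s (pre x n)"
  by (induction n) (simp_all add: pre_Suc)

lemma trans_out_prefix_eq: "trans_out_prefix t out s x n = lout t out s (pre x n)"
  by (induction n) (simp_all add: trans_out_prefix_def pre_Suc lout_snoc trans_state_eq)

lemma trans_output_is_eq:
  "trans_output_is t out s x y \<longleftrightarrow> (\<forall>n. prefixof (lout t out s (pre x n)) y)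
      \<and> (\<forall>m. \<exists>n. m \<le> length (lout t out s (pre x n)))"
  by (simp add: trans_output_is_def trans_out_prefix_eq prefixof_def)

lemma rational_map_computes:
  assumes "rational_map f"
  shows "\<exists>(t :: nat \<Rightarrow> bool \<Rightarrow> nat) out s. finite (range (foldl t s)) \<and> computes t out s f"
proof -
  obtain k s0 t out where k: "s0 < k" "\<forall>s < k. \<forall>a. t s a < k" "\<forall>x. trans_output_is t out s0 x (f x)"
    using assms unfolding rational_map_def by blast
  have "foldl t s v < k" if "s < k" for s v
    using that by (induction v arbitrary: s) (auto simp: k(2))
  then have "range (foldl t s0) \<subseteq> {..<k}" using k(1) by auto
  then have "finite (range (foldl t s0))" by (rule finite_subset) simp
  moreover have "computes t out s0 f"
    using k(3) by (simp add: computes_def trans_output_is_eq)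
  ultimately show ?thesis by blast
qed

lemma computes_rational_map:
  fixes t :: "'s \<Rightarrow> bool \<Rightarrow> 's"
  assumes fin: "finite (range (foldl t s))" and c: "computes t out s f"
  shows "rational_map f"
proof -
  define R where "R = range (foldl t s)"
  obtain e where e: "bij_betw e R {0..<card R}"
    using ex_bij_betw_finite_nat[of R] fin by (auto simp: R_def)
  define k where "k = card R"
  define t' where "t' = (\<lambda>i a. e (t (inv_into R e i) a))"
  define out' where "out' = (\<lambda>i a. out (inv_into R e i) a)"
  have inR: "foldl t s v \<in> R" for v by (simp add: R_def)
  have tR: "t q a \<in> R" if q: "q \<in> R" for q a
  proof -
    obtain v where "q = foldl t s v" using q unfolding R_def by blast
    then have "t q a = foldl t s (v @ [a])" by simp
    then show ?thesis unfolding R_def by (metis rangeI)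
  qed
  have ek: "e q < k" if "q \<in> R" for q
    using e that by (auto simp: k_def bij_betw_def)
  have inv: "inv_into R e (e q) = q" if "q \<in> R" for q
    using e that by (simp add: bij_betw_def)
  have st: "trans_state t' (e s) x n = e (foldl t s (pre x n))" for x n
  proof (induction n)
    case 0 show ?case by simp
  next
    case (Suc n)
    then show ?case using inv[OF inR] by (simp add: t'_def pre_Suc)
  qed
  have "trans_out_prefix t' out' (e s) x n = lout t out s (pre x n)" for x n
  proof (induction n)
    case 0 show ?case by (simp add: trans_out_prefix_def)
  next
    case (Suc n)
    have "trans_out_prefix t' out' (e s) x (Suc n) = trans_out_prefix t' out' (e s) x n @ out' (trans_state t' (e s) x n) (x n)"
      by (simp add: trans_out_prefix_def)
    also have "\<dots> = lout t out s (pre x (Suc n))"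
      using Suc inv[OF inR] by (simp add: st out'_def pre_Suc lout_snoc)
    finally show ?case .
  qed
  then have "trans_output_is t' out' (e s) x (f x)" for x
    using c by (simp add: trans_output_is_def prefixof_def computes_def)
  moreover have "e s < k" using ek[of s] inR[of "[]"] by simp
  moreover have "\<forall>i<k. \<forall>a. t' i a < k"
  proof (intro allI impI)
    fix i a assume "i < k"
    then have "i \<in> e ` R" using e by (auto simp: bij_betw_def k_def)
    then have "inv_into R e i \<in> R" by (rule inv_into_into)
    then show "t' i a < k" by (simp add: t'_def ek tR)
  qed
  ultimately show ?thesis unfolding rational_map_def by blast
qed

lemma computes_id: "computes (\<lambda>s a. s) (\<lambda>s a. [a]) () id"
proof -
  have "lout (\<lambda>s a. s) (\<lambda>s a. [a]) () v = v" for v by (induction v) auto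
  then show ?thesis by (auto simp: computes_def prefixof_def intro: exI[of _ m for m])
qed

lemma fin_id: "finite (range (foldl (\<lambda>s a. s) ()))" by simp

definition tcomp :: "('p \<Rightarrow> bool \<Rightarrow> 'p) \<Rightarrow> ('p \<Rightarrow> bool \<Rightarrow> bool list) \<Rightarrow> ('q \<Rightarrow> bool \<Rightarrow> 'q) \<Rightarrow> ('p \<times> 'q) \<Rightarrow> bool \<Rightarrow> ('p \<times> 'q)" where "tcomp t1 o1 t2 = (\<lambda>(p,q) a. (t1 p a, foldl t2 q (o1 p a)))"
definition ocomp :: "('p \<Rightarrow> bool \<Rightarrow> bool list) \<Rightarrow> ('q \<Rightarrow> bool \<Rightarrow> 'q) \<Rightarrow> ('q \<Rightarrow> bool \<Rightarrow> bool list) \<Rightarrow> ('p \<times> 'q) \<Rightarrow> bool \<Rightarrow> bool list" where "ocomp o1 t2 o2 = (\<lambda>(p,q) a. lout t2 o2 q (o1 p a))"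

lemma foldl_comp: "foldl (tcomp t1 o1 t2) (p,q) v = (foldl t1 p v, foldl t2 q (lout t1 o1 p v))"
  by (induction v arbitrary: p q) (auto simp: tcomp_def)

lemma lout_comp: "lout (tcomp t1 o1 t2) (ocomp o1 t2 o2) (p,q) v = lout t2 o2 q (lout t1 o1 p v)"
  by (induction v arbitrary: p q) (auto simp: tcomp_def ocomp_def lout_append)

lemma fin_comp:
  assumes "finite (range (foldl t1 s1))" "finite (range (foldl t2 s2))"
  shows "finite (range (foldl (tcomp t1 o1 t2) (s1,s2)))"
proof -
  have "foldl (tcomp t1 o1 t2) (s1,s2) v \<in> range (foldl t1 s1) \<times> range (foldl t2 s2)" for v
    using foldl_comp[of t1 o1 t2 s1 s2 v] by (simp add: mem_Times_iff)
  then have "range (foldl (tcomp t1 o1 t2) (s1,s2)) \<subseteq> range (foldl t1 s1) \<times> range (foldl t2 s2)"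
    by blast
  then show ?thesis using assms by (meson finite_SigmaI finite_subset)
qed

lemma computes_comp:
  assumes c1: "computes t1 o1 s1 f1" and c2: "computes t2 o2 s2 f2"
  shows "computes (tcomp t1 o1 t2) (ocomp o1 t2 o2) (s1,s2) (f2 \<circ> f1)"
  unfolding computes_def
proof (intro allI conjI)
  fix x n
  obtain L where pf: "lout t1 o1 s1 (pre x n) = pre (f1 x) L"
    using c1 prefixof_pre unfolding computes_def by blast
  have "prefixof (lout t2 o2 s2 (pre (f1 x) L)) (f2 (f1 x))"
    using c2 by (simp add: computes_def)
  then show "prefixof (lout (tcomp t1 o1 t2) (ocomp o1 t2 o2) (s1, s2) (pre x n)) ((f2 \<circ> f1) x)"
    by (simp add: lout_comp pf)
next
  fix x m
  obtain m1 where m1: "m \<le> length (lout t2 o2 s2 (pre (f1 x) m1))" using c2 unfolding computes_def by blast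
  obtain n where n: "m1 \<le> length (lout t1 o1 s1 (pre x n))" using c1 unfolding computes_def by blast
  obtain L where pf: "lout t1 o1 s1 (pre x n) = pre (f1 x) L"
    using c1 prefixof_pre unfolding computes_def by blast
  have "m1 \<le> L" using n pf by simp
  then have "m \<le> length (lout t2 o2 s2 (pre (f1 x) L))"
    using m1 lout_pre_mono[OF \<open>m1 \<le> L\<close>, of t2 o2 s2 "f1 x"] by linarith
  moreover have "lout (tcomp t1 o1 t2) (ocomp o1 t2 o2) (s1, s2) (pre x n) = lout t2 o2 s2 (pre (f1 x) L)"
    by (simp add: lout_comp pf)
  ultimately show "\<exists>n. m \<le> length (lout (tcomp t1 o1 t2) (ocomp o1 t2 o2) (s1, s2) (pre x n))"
    by metis
qed

lemma rational_comp: "rational_map f1 \<Longrightarrow> rational_map f2 \<Longrightarrow> rational_map (f2 \<circ> f1)"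
  by (meson computes_comp computes_rational_map fin_comp rational_map_computes)

lemma rational_id: "rational_map id"
  using computes_rational_map[OF fin_id computes_id] .

definition app :: "bool list \<Rightarrow> cantor \<Rightarrow> cantor" where
  "app w \<eta> = (\<lambda>i. if i < length w then w ! i else \<eta> (i - length w))"

definition shift :: "nat \<Rightarrow> cantor \<Rightarrow> cantor" where
  "shift k x = (\<lambda>i. x (i + k))"

definition zeros :: cantor where "zeros = (\<lambda>_. False)"

lemma app_lt[simp]: "i < length w \<Longrightarrow> app w \<eta> i = w ! i"
  by (simp add: app_def)

lemma app_ge[simp]: "app w \<eta> (length w + i) = \<eta> i"
  by (simp add: app_def)

lemma app_ge': "length w \<le> i \<Longrightarrow> app w \<eta> i = \<eta> (i - length w)"
  by (simp add: app_def)

lemma shift_app[simp]: "shift (length w) (app w \<eta>) = \<eta>"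
  by (simp add: shift_def app_def fun_eq_iff)

lemma app_Nil[simp]: "app [] \<eta> = \<eta>"
  by (simp add: app_def)

lemma shift_0[simp]: "shift 0 x = x"
  by (simp add: shift_def)

lemma app_append: "app (v @ w) \<eta> = app v (app w \<eta>)"
  by (auto simp: app_def fun_eq_iff nth_append)

lemma shift_shift: "shift a (shift b y) = shift (a + b) y"
  by (simp add: shift_def ac_simps)

lemma app_pre_shift: "app (pre y n) (shift n y) = y"
  by (auto simp: app_def shift_def fun_eq_iff)

lemma agree_pre: "agree n y y' \<Longrightarrow> pre y n = pre y' n"
  by (simp add: agree_def pre_def)

lemma prefixof_app_shift: "prefixof l y \<Longrightarrow> app l (shift (length l) y) = y"
  by (metis app_pre_shift prefixof_pre)

lemma pre_app: "pre (app w \<xi>) (length w + n) = w @ pre \<xi> n"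
  by (auto simp: list_eq_iff_nth_eq nth_append app_def)

lemma pre_app_len: "pre (app w \<xi>) (length w) = w"
  using pre_app[of w \<xi> 0] by simp

lemma agree_shift: "agree (L + m) p q \<longleftrightarrow> agree L p q \<and> agree m (shift L p) (shift L q)"
proof
  assume "agree (L + m) p q" then show "agree L p q \<and> agree m (shift L p) (shift L q)"
    by (auto simp: agree_def shift_def)
next
  assume a: "agree L p q \<and> agree m (shift L p) (shift L q)"
  show "agree (L + m) p q" unfolding agree_def
  proof (intro allI impI)
    fix i assume "i < L + m"
    show "p i = q i"
    proof (cases "i < L")
      case True then show ?thesis using a by (simp add: agree_def)
    next
      case False
      then have "i - L < m" "i = (i - L) + L" using \<open>i < L + m\<close> by auto
      then show ?thesis using a unfolding agree_def shift_def by metis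
    qed
  qed
qed

lemma agree_mono: "agree n x y \<Longrightarrow> m \<le> n \<Longrightarrow> agree m x y"
  by (simp add: agree_def)

definition agreeAll :: "(cantor \<Rightarrow> cantor) \<Rightarrow> bool list \<Rightarrow> nat \<Rightarrow> bool" where
  "agreeAll h v n \<longleftrightarrow> (\<forall>\<eta> \<eta>'. agree n (h (app v \<eta>)) (h (app v \<eta>')))"

definition Lc :: "(cantor \<Rightarrow> cantor) \<Rightarrow> bool list \<Rightarrow> nat" where
  "Lc h v = (GREATEST n. agreeAll h v n)"

lemma agreeAll_0[simp]: "agreeAll h v 0"
  by (simp add: agreeAll_def agree_def)

lemma agreeAll_mono: "agreeAll h v n \<Longrightarrow> m \<le> n \<Longrightarrow> agreeAll h v m"
  by (auto simp: agreeAll_def agree_def)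

lemma Lc_props:
  assumes "\<And>n. agreeAll h v n \<Longrightarrow> n \<le> B"
  shows "agreeAll h v (Lc h v)" "\<And>n. agreeAll h v n \<Longrightarrow> n \<le> Lc h v"
proof -
  show "agreeAll h v (Lc h v)" unfolding Lc_def
    by (rule GreatestI_nat[of _ 0]) (use assms in auto)
  show "\<And>n. agreeAll h v n \<Longrightarrow> n \<le> Lc h v" unfolding Lc_def
    by (rule Greatest_le_nat[of _ _ B]) (use assms in auto)
qed

lemma agreeAll_bound:
  assumes "inj h"
  shows "\<exists>B. \<forall>n. agreeAll h v n \<longrightarrow> n \<le> B"
proof -
  define ones :: cantor where "ones = (\<lambda>_. True)"
  have "app v zeros \<noteq> app v ones"
  proof
    assume "app v zeros = app v ones"
    then have "app v zeros (length v + 0) = app v ones (length v + 0)" by simp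
    then show False using app_ge[of v zeros 0] app_ge[of v ones 0] by (simp add: zeros_def ones_def)
  qed
  then have "h (app v zeros) \<noteq> h (app v ones)" using assms by (meson injD)
  then obtain d where d: "h (app v zeros) d \<noteq> h (app v ones) d" by blast
  have "n \<le> d" if "agreeAll h v n" for n
  proof (rule ccontr)
    assume "\<not> n \<le> d"
    then have "d < n" by simp
    then show False using that d by (auto simp: agreeAll_def agree_def)
  qed
  then show ?thesis by blast
qed

definition strip :: "(cantor \<Rightarrow> cantor) \<Rightarrow> bool \<Rightarrow> (cantor \<Rightarrow> cantor)" where
  "strip h a = (\<lambda>\<eta>. shift (Lc h [a]) (h (app [a] \<eta>)))"

definition outI :: "(cantor \<Rightarrow> cantor) \<Rightarrow> bool \<Rightarrow> bool list" where
  "outI h a = map (\<lambda>i. h (app [a] zeros) i) [0..<Lc h [a]]"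

locale invctx =
  fixes g :: "cantor \<Rightarrow> cantor"
  assumes inj: "inj g" and surj: "surj g" and cont: "continuous_on UNIV g"
begin

definition S :: "bool list \<Rightarrow> cantor \<Rightarrow> cantor" where
  "S u = (\<lambda>\<eta>. shift (Lc g u) (g (app u \<eta>)))"

lemma Lc_g: "agreeAll g v (Lc g v)" "agreeAll g v n \<Longrightarrow> n \<le> Lc g v"
proof -
  obtain B where "\<forall>n. agreeAll g v n \<longrightarrow> n \<le> B" using agreeAll_bound[OF inj] by blast
  then show "agreeAll g v (Lc g v)" "agreeAll g v n \<Longrightarrow> n \<le> Lc g v"
    using Lc_props[of g v B] by auto
qed

lemma Lc_Nil: "Lc g [] = 0"
proof (rule ccontr)
  assume "Lc g [] \<noteq> 0"
  then have "agreeAll g [] 1" using Lc_g(1)[of "[]"] agreeAll_mono by fastforce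
  obtain \<eta> where e: "g \<eta> = zeros" using surj by (metis surjD)
  obtain \<eta>' where e': "g \<eta>' = (\<lambda>_. True)" using surj by (metis surjD)
  have "agree 1 (g \<eta>) (g \<eta>')" using \<open>agreeAll g [] 1\<close> by (simp add: agreeAll_def)
  then have "g \<eta> 0 = g \<eta>' 0" by (simp add: agree_def)
  then show False using e e' by (simp add: zeros_def)
qed

lemma S_Nil: "S [] = g"
  by (simp add: S_def Lc_Nil fun_eq_iff)

lemma agreeAll_snoc: "agreeAll g u n \<Longrightarrow> agreeAll g (u @ [a]) n"
  by (simp add: agreeAll_def app_append)

lemma Lc_snoc_equiv:
  "agreeAll (S u) [a] m \<longleftrightarrow> agreeAll g (u @ [a]) (Lc g u + m)"
proof -
  have ag: "agree (Lc g u) (g (app (u @ [a]) \<eta>)) (g (app (u @ [a]) \<eta>'))" for \<eta> \<eta>'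
    using agreeAll_snoc[OF Lc_g(1)[of u], of a] by (simp add: agreeAll_def)
  have "S u (app [a] \<eta>) = shift (Lc g u) (g (app (u @ [a]) \<eta>))" for \<eta>
    by (simp add: S_def app_append)
  then show ?thesis using ag by (simp add: agreeAll_def agree_shift)
qed

lemma Lc_snoc:
  shows "Lc g u \<le> Lc g (u @ [a])" "Lc (S u) [a] = Lc g (u @ [a]) - Lc g u"
proof -
  define L where "L = Lc g u"
  define G where "G = Lc g (u @ [a])"
  show "Lc g u \<le> Lc g (u @ [a])"
    using Lc_g(2)[OF agreeAll_snoc[OF Lc_g(1)[of u]]] .
  then have LG: "L \<le> G" by (simp add: L_def G_def)
  have P: "agreeAll (S u) [a] m \<Longrightarrow> m \<le> G - L" for m
    using Lc_snoc_equiv[of u a m] Lc_g(2)[of "u @ [a]" "L + m"] by (simp add: L_def G_def)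
  have "agreeAll (S u) [a] (G - L)"
    using Lc_snoc_equiv[of u a "G - L"] Lc_g(1)[of "u @ [a]"] LG by (simp add: L_def G_def)
  then show "Lc (S u) [a] = Lc g (u @ [a]) - Lc g u"
    using Lc_props[of "S u" "[a]" "G - L", OF P] P by (simp add: L_def G_def le_antisym)
qed

lemma strip_S: "strip (S u) a = S (u @ [a])"
proof -
  have "strip (S u) a = (\<lambda>\<eta>. shift (Lc g (u @ [a]) - Lc g u) (shift (Lc g u) (g (app (u @ [a]) \<eta>))))"
    unfolding strip_def Lc_snoc(2) by (simp add: S_def app_append)
  also have "\<dots> = S (u @ [a])"
    using Lc_snoc(1)[of u a] by (simp add: shift_shift S_def)
  finally show ?thesis .
qed

lemma foldl_strip: "foldl strip g u = S u"
  by (induction u rule: rev_induct) (simp_all add: S_Nil strip_S)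

lemma lout_strip: "lout strip outI g u = map (\<lambda>i. g (app u zeros) i) [0..<Lc g u]"
proof (induction u rule: rev_induct)
  case Nil then show ?case by (simp add: Lc_Nil)
next
  case (snoc a u)
  define L where "L = Lc g u"
  define G where "G = Lc g (u @ [a])"
  have LG: "L \<le> G" using Lc_snoc(1) by (simp add: L_def G_def)
  have ag: "g (app u zeros) i = g (app (u @ [a]) zeros) i" if "i < L" for i
    using Lc_g(1)[of u] that unfolding agreeAll_def agree_def L_def
    by (metis app_append)
  have o: "outI (S u) a = map (\<lambda>i. g (app (u @ [a]) zeros) (i + L)) [0..<G - L]"
    unfolding outI_def Lc_snoc(2) by (simp add: S_def app_append shift_def L_def G_def)
  have "lout strip outI g (u @ [a]) = map (\<lambda>i. g (app u zeros) i) [0..<L] @ outI (S u) a"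
    by (simp add: lout_snoc snoc foldl_strip L_def)
  also have "\<dots> = map (\<lambda>i. g (app (u @ [a]) zeros) i) [0..<G]"
    unfolding o using LG ag by (auto simp: list_eq_iff_nth_eq nth_append)
  finally show ?case by (simp add: G_def)
qed

lemma computes_inv: "computes strip outI g g"
  unfolding computes_def
proof (intro allI conjI)
  fix y n
  define u where "u = pre y n"
  have "g (app u zeros) i = g y i" if "i < Lc g u" for i
  proof -
    have "agree (Lc g u) (g (app u zeros)) (g (app u (shift n y)))"
      using Lc_g(1)[of u] by (simp add: agreeAll_def)
    then show ?thesis using that app_pre_shift[of y n] by (simp add: agree_def u_def)
  qed
  then show "prefixof (lout strip outI g (pre y n)) (g y)"
    by (simp add: prefixof_def lout_strip u_def)
next
  fix y m
  obtain M where M: "\<forall>x z. agree M x z \<longrightarrow> agree m (g x) (g z)" using unif_cont[OF cont] by blast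
  have "agree M (app (pre y M) \<eta>) (app (pre y M) \<eta>')" for \<eta> \<eta>'
    by (simp add: agree_def)
  then have "agreeAll g (pre y M) m" using M by (simp add: agreeAll_def)
  then have "m \<le> Lc g (pre y M)" by (rule Lc_g(2))
  then show "\<exists>n. m \<le> length (lout strip outI g (pre y n))"
    by (auto simp: lout_strip)
qed

end

lemma prefixof_append: assumes "prefixof (l1 @ l2) y" shows "prefixof l2 (shift (length l1) y)"
  unfolding prefixof_def shift_def
proof (intro allI impI)
  fix i assume "i < length l2"
  then have "length l1 + i < length (l1 @ l2)" by simp
  then have "(l1 @ l2) ! (length l1 + i) = y (length l1 + i)" using assms unfolding prefixof_def by blast
  moreover have "(l1 @ l2) ! (length l1 + i) = l2 ! i" by (rule nth_append_length_plus)
  ultimately show "l2 ! i = y (i + length l1)" by (metis add.commute)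
qed

lemma app_inj: assumes "app w a = app w b" shows "a = b"
proof -
  have "shift (length w) (app w a) = shift (length w) (app w b)" using assms by simp
  then show ?thesis by simp
qed

lemma agree_app: "agree k a b \<Longrightarrow> agree (length o' + k) (app o' a) (app o' b)"
  by (auto simp: agree_def app_def)

locale invfin = invctx g for g +
  fixes f :: "cantor \<Rightarrow> cantor" and t :: "'s \<Rightarrow> bool \<Rightarrow> 's" and out s0
  assumes fg: "\<And>y. f (g y) = y" and gf: "\<And>x. g (f x) = x"
    and comp: "computes t out s0 f" and finR: "finite (range (foldl t s0))"
begin

definition Fw :: "bool list \<Rightarrow> cantor \<Rightarrow> cantor" where
  "Fw w \<xi> = shift (length (lout t out s0 w)) (f (app w \<xi>))"

lemma F_app: "f (app w \<xi>) = app (lout t out s0 w) (Fw w \<xi>)"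
proof -
  have "prefixof (lout t out s0 (pre (app w \<xi>) (length w))) (f (app w \<xi>))"
    using comp by (simp add: computes_def)
  then have "prefixof (lout t out s0 w) (f (app w \<xi>))" by (simp add: pre_app_len)
  then show ?thesis unfolding Fw_def by (rule prefixof_app_shift[symmetric])
qed

lemma Fw_prefix: "prefixof (lout t out (foldl t s0 w) (pre \<xi> n)) (Fw w \<xi>)"
proof -
  have "prefixof (lout t out s0 (pre (app w \<xi>) (length w + n))) (f (app w \<xi>))"
    using comp by (simp add: computes_def)
  then have "prefixof (lout t out s0 w @ lout t out (foldl t s0 w) (pre \<xi> n)) (f (app w \<xi>))"
    by (simp add: pre_app lout_append)
  then show ?thesis unfolding Fw_def by (rule prefixof_append)
qed

lemma Fw_unb: "\<exists>n. m \<le> length (lout t out (foldl t s0 w) (pre \<xi> n))"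
proof -
  obtain N where N: "m + length (lout t out s0 w) \<le> length (lout t out s0 (pre (app w \<xi>) N))"
    using comp unfolding computes_def by blast
  define N' where "N' = max N (length w)"
  have "length (lout t out s0 (pre (app w \<xi>) N)) \<le> length (lout t out s0 (pre (app w \<xi>) N'))"
    by (rule lout_pre_mono) (simp add: N'_def)
  moreover have "N' = length w + (N' - length w)" by (simp add: N'_def)
  then have "lout t out s0 (pre (app w \<xi>) N') = lout t out s0 w @ lout t out (foldl t s0 w) (pre \<xi> (N' - length w))"
    by (metis pre_app lout_append)
  ultimately show ?thesis using N by (intro exI[of _ "N' - length w"]) simp
qed

lemma Fw_det: assumes "foldl t s0 w = foldl t s0 w'" shows "Fw w = Fw w'"
proof (intro ext)
  fix \<xi> i
  obtain n where n: "Suc i \<le> length (lout t out (foldl t s0 w) (pre \<xi> n))" using Fw_unb by blast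
  have "Fw w \<xi> i = lout t out (foldl t s0 w) (pre \<xi> n) ! i"
    using Fw_prefix[of w \<xi> n] n by (simp add: prefixof_def)
  moreover have "Fw w' \<xi> i = lout t out (foldl t s0 w) (pre \<xi> n) ! i"
    using Fw_prefix[of w' \<xi> n] n assms by (simp add: prefixof_def)
  ultimately show "Fw w \<xi> i = Fw w' \<xi> i" by simp
qed

lemma Fw_inj: "Fw w \<xi> = Fw w \<xi>' \<Longrightarrow> \<xi> = \<xi>'"
proof -
  assume "Fw w \<xi> = Fw w \<xi>'"
  then have "f (app w \<xi>) = f (app w \<xi>')" by (simp add: F_app)
  then have "g (f (app w \<xi>)) = g (f (app w \<xi>'))" by simp
  then have "app w \<xi> = app w \<xi>'" by (simp add: gf)
  then show "\<xi> = \<xi>'" by (rule app_inj)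
qed

lemma Fw_sep: "\<exists>N. \<forall>\<xi> \<xi>'. agree N (Fw w \<xi>) (Fw w \<xi>') \<longrightarrow> \<xi> 0 = \<xi>' 0"
proof -
  obtain M where M: "\<forall>x z. agree M x z \<longrightarrow> agree (Suc (length w)) (g x) (g z)"
    using unif_cont[OF cont] by blast
  have "\<xi> 0 = \<xi>' 0" if a: "agree M (Fw w \<xi>) (Fw w \<xi>')" for \<xi> \<xi>'
  proof -
    have "agree (length (lout t out s0 w) + M) (app (lout t out s0 w) (Fw w \<xi>)) (app (lout t out s0 w) (Fw w \<xi>'))"
      by (rule agree_app[OF a])
    then have "agree (length (lout t out s0 w) + M) (f (app w \<xi>)) (f (app w \<xi>'))"
      by (simp only: F_app)
    then have "agree M (f (app w \<xi>)) (f (app w \<xi>'))" by (rule agree_mono) simp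
    then have "agree (Suc (length w)) (g (f (app w \<xi>))) (g (f (app w \<xi>')))" using M by blast
    then have "agree (Suc (length w)) (app w \<xi>) (app w \<xi>')" by (simp only: gf)
    then have "app w \<xi> (length w + 0) = app w \<xi>' (length w + 0)" unfolding agree_def by simp
    then show ?thesis by (simp only: app_ge)
  qed
  then show ?thesis by blast
qed

definition wit :: "'s \<Rightarrow> bool list" where "wit s = (SOME w. foldl t s0 w = s)"
definition Fs :: "'s \<Rightarrow> cantor \<Rightarrow> cantor" where "Fs s = Fw (wit s)"
definition Ns :: "'s \<Rightarrow> nat" where
  "Ns s = (SOME N. \<forall>\<xi> \<xi>'. agree N (Fs s \<xi>) (Fs s \<xi>') \<longrightarrow> \<xi> 0 = \<xi>' 0)"
definition Nmax where "Nmax = Max (Ns ` range (foldl t s0))"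
definition Phi :: "'s \<Rightarrow> bool list \<Rightarrow> cantor \<Rightarrow> cantor" where
  "Phi s r = (\<lambda>\<eta>. THE \<xi>. Fs s \<xi> = app r \<eta>)"

lemma Fs_eq: "Fs (foldl t s0 w) = Fw w"
proof -
  have "\<exists>w'. foldl t s0 w' = foldl t s0 w" by blast
  then have "foldl t s0 (wit (foldl t s0 w)) = foldl t s0 w"
    unfolding wit_def by (rule someI_ex)
  then show ?thesis unfolding Fs_def by (rule Fw_det)
qed

lemma Ns_prop: "agree (Ns s) (Fs s \<xi>) (Fs s \<xi>') \<Longrightarrow> \<xi> 0 = \<xi>' 0"
proof -
  have "\<exists>N. \<forall>\<xi> \<xi>'. agree N (Fs s \<xi>) (Fs s \<xi>') \<longrightarrow> \<xi> 0 = \<xi>' 0"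
    unfolding Fs_def by (rule Fw_sep)
  then have "\<forall>\<xi> \<xi>'. agree (Ns s) (Fs s \<xi>) (Fs s \<xi>') \<longrightarrow> \<xi> 0 = \<xi>' 0"
    unfolding Ns_def by (rule someI_ex)
  then show "agree (Ns s) (Fs s \<xi>) (Fs s \<xi>') \<Longrightarrow> \<xi> 0 = \<xi>' 0" by blast
qed

lemma Ns_le: "Ns (foldl t s0 w) \<le> Nmax"
  unfolding Nmax_def using finR by (intro Max_ge) auto

lemma S_repr: "\<exists>s r. s \<in> range (foldl t s0) \<and> length r < Nmax \<and> S u = Phi s r"
proof -
  define L where "L = Lc g u"
  define w where "w = pre (g (app u zeros)) L"
  define o' where "o' = lout t out s0 w"
  have a: "g (app u \<eta>) = app w (S u \<eta>)" for \<eta>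
  proof -
    have "agree L (g (app u zeros)) (g (app u \<eta>))"
      using Lc_g(1)[of u] by (simp add: agreeAll_def L_def)
    then have "w = pre (g (app u \<eta>)) L" by (simp add: w_def agree_pre)
    then show ?thesis by (simp add: S_def L_def app_pre_shift)
  qed
  have b: "app u \<eta> = app o' (Fw w (S u \<eta>))" for \<eta>
  proof -
    have "app u \<eta> = f (g (app u \<eta>))" by (simp only: fg)
    also have "\<dots> = f (app w (S u \<eta>))" by (simp only: a)
    also have "\<dots> = app o' (Fw w (S u \<eta>))" by (simp only: F_app o'_def)
    finally show ?thesis .
  qed
  have c: "length o' \<le> length u"
  proof (rule ccontr)
    assume "\<not> length o' \<le> length u"
    then have lt: "length u < length o'" by simp
    define \<eta> :: cantor where "\<eta> = (\<lambda>_. \<not> o' ! length u)"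
    have "app u \<eta> (length u + 0) = app o' (Fw w (S u \<eta>)) (length u)" using b[of \<eta>] by simp
    then have "\<eta> 0 = o' ! length u" using lt by (simp only: app_ge app_lt)
    then show False by (simp add: \<eta>_def)
  qed
  define r where "r = drop (length o') u"
  have d: "u = o' @ r"
  proof -
    have "o' ! i = u ! i" if "i < length o'" for i
    proof -
      have "app u zeros i = app o' (Fw w (S u zeros)) i" using b[of zeros] by simp
      then show ?thesis using that c by simp
    qed
    then have "take (length o') u = o'" using c by (simp add: list_eq_iff_nth_eq)
    then show ?thesis by (metis append_take_drop_id r_def)
  qed
  have e: "Fw w (S u \<eta>) = app r \<eta>" for \<eta>
  proof -
    have "app o' (app r \<eta>) = app o' (Fw w (S u \<eta>))" using b[of \<eta>] d by (simp add: app_append)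
    then have "app r \<eta> = Fw w (S u \<eta>)" by (rule app_inj)
    then show ?thesis by simp
  qed
  define s where "s = foldl t s0 w"
  have Fs: "Fs s = Fw w" by (simp add: s_def Fs_eq)
  have "S u = Phi s r"
  proof (rule ext)
    fix \<eta>
    have "(THE \<xi>. Fw w \<xi> = app r \<eta>) = S u \<eta>"
    proof (rule the_equality)
      show "Fw w (S u \<eta>) = app r \<eta>" by (rule e)
    next
      fix x assume "Fw w x = app r \<eta>"
      then have "Fw w x = Fw w (S u \<eta>)" using e[of \<eta>] by simp
      then show "x = S u \<eta>" by (rule Fw_inj)
    qed
    moreover have "Phi s r \<eta> = (THE \<xi>. Fw w \<xi> = app r \<eta>)" by (simp add: Phi_def Fs)
    ultimately show "S u \<eta> = Phi s r \<eta>" by simp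
  qed
  moreover have "length r < Nmax"
  proof (rule ccontr)
    assume "\<not> length r < Nmax"
    then have rN: "Ns s \<le> length r" using Ns_le[of w] by (simp add: s_def)
    have "\<not> agreeAll g u (Suc L)" using Lc_g(2)[of u "Suc L"] by (auto simp: L_def)
    then obtain \<eta> \<eta>' where ne: "\<not> agree (Suc L) (g (app u \<eta>)) (g (app u \<eta>'))"
      by (auto simp: agreeAll_def)
    have "agree L (g (app u \<eta>)) (g (app u \<eta>'))"
      using Lc_g(1)[of u] by (simp add: agreeAll_def L_def)
    then have ne2: "g (app u \<eta>) L \<noteq> g (app u \<eta>') L"
      using ne by (auto simp: agree_def less_Suc_eq)
    have "agree (length r) (app r \<eta>) (app r \<eta>')" by (simp add: agree_def)
    then have "agree (Ns s) (Fs s (S u \<eta>)) (Fs s (S u \<eta>'))"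
      using rN by (simp add: Fs e agree_mono)
    then have "S u \<eta> 0 = S u \<eta>' 0" by (rule Ns_prop)
    then show False using ne2 by (simp add: S_def shift_def L_def)
  qed
  moreover have "s \<in> range (foldl t s0)" by (simp add: s_def)
  ultimately show ?thesis by blast
qed

lemma fin_S: "finite (range (foldl strip g))"
proof -
  have "range (foldl strip g) \<subseteq> (\<lambda>(s, r). Phi s r) ` (range (foldl t s0) \<times> {r. set r \<subseteq> UNIV \<and> length r \<le> Nmax})"
  proof
    fix h assume "h \<in> range (foldl strip g)"
    then obtain u where "h = S u" by (auto simp: foldl_strip)
    then obtain s r where sr: "s \<in> range (foldl t s0)" "length r < Nmax" "h = Phi s r" using S_repr by blast
    then have "(s, r) \<in> range (foldl t s0) \<times> {r. set r \<subseteq> UNIV \<and> length r \<le> Nmax}" by simp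
    then show "h \<in> (\<lambda>(s, r). Phi s r) ` (range (foldl t s0) \<times> {r. set r \<subseteq> UNIV \<and> length r \<le> Nmax})"
      by (rule rev_image_eqI[of "(s,r)"]) (simp_all add: sr)
  qed
  moreover have "finite (range (foldl t s0) \<times> {r. set r \<subseteq> (UNIV::bool set) \<and> length r \<le> Nmax})"
    using finR finite_lists_length_le[of "UNIV::bool set" Nmax] by simp
  ultimately show ?thesis by (meson finite_imageI finite_subset)
qed

end

lemma rational_inverse:
  assumes h: "homeomorphism UNIV UNIV f g" and r: "rational_map f"
  shows "rational_map g"
proof -
  obtain t :: "nat \<Rightarrow> bool \<Rightarrow> nat" and out s0 where ts: "finite (range (foldl t s0))" "computes t out s0 f"
    using rational_map_computes[OF r] by blast
  have fg: "\<And>y. f (g y) = y" and gf: "\<And>x. g (f x) = x" and cg: "continuous_on UNIV g"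
    using h by (auto simp: homeomorphism_def)
  have "inj g" by (metis fg injI)
  moreover have "surj g" by (metis gf surjI)
  ultimately interpret invfin g f t out s0
    using fg gf ts cg by unfold_locales auto
  show ?thesis using computes_rational_map[OF fin_S computes_inv] .
qed

lemma computes_cont:
  assumes c: "computes t out s f"
  shows "continuous_on UNIV f"
proof (rule locconst_cont)
  fix x i
  obtain n where n: "Suc i \<le> length (lout t out s (pre x n))" using c unfolding computes_def by blast
  have "f y i = f x i" if "agree n x y" for y
  proof -
    have p: "pre x n = pre y n" using that by (rule agree_pre)
    have il: "i < length (lout t out s (pre x n))" using n by simp
    then have "lout t out s (pre x n) ! i = f x i" using c unfolding computes_def prefixof_def by blast
    moreover have "lout t out s (pre y n) ! i = f y i" using il p c unfolding computes_def prefixof_def by auto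
    ultimately show ?thesis using p by simp
  qed
  then show "\<exists>n. \<forall>y. agree n x y \<longrightarrow> f y i = f x i" by blast
qed

lemma rational_cont: assumes "rational_map f" shows "continuous_on UNIV f"
proof -
  obtain t :: "nat \<Rightarrow> bool \<Rightarrow> nat" and out s where "computes t out s f"
    using rational_map_computes[OF assms] by blast
  then show ?thesis by (rule computes_cont)
qed

lemma carrier_RG: "carrier RG = rational_homeos" and mult_RG: "x \<otimes>\<^bsub>RG\<^esub> y = x \<circ> y"
  and one_RG: "\<one>\<^bsub>RG\<^esub> = id"
  by (simp_all add: RG_def)

lemma in_RG: "f \<in> carrier RG \<longleftrightarrow> (\<exists>g. homeomorphism UNIV UNIV f g) \<and> rational_map f"
  by (simp add: RG_def rational_homeos_def)

lemma group_RG: "group RG"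
proof (rule groupI)
  fix x y assume x: "x \<in> carrier RG" and y: "y \<in> carrier RG"
  obtain gx where gx: "homeomorphism UNIV UNIV x gx" using x by (auto simp: in_RG)
  obtain gy where gy: "homeomorphism UNIV UNIV y gy" using y by (auto simp: in_RG)
  have "homeomorphism UNIV UNIV (x \<circ> y) (gy \<circ> gx)" by (rule homeomorphism_compose[OF gy gx])
  moreover have "rational_map (x \<circ> y)" using x y by (simp add: in_RG rational_comp)
  ultimately show "x \<otimes>\<^bsub>RG\<^esub> y \<in> carrier RG" by (auto simp: in_RG mult_RG)
next
  have "homeomorphism UNIV UNIV id id" using homeomorphism_ident by (simp add: id_def)
  then show "\<one>\<^bsub>RG\<^esub> \<in> carrier RG" by (auto simp: in_RG one_RG rational_id)
next
  fix x y z assume "x \<in> carrier RG" "y \<in> carrier RG" "z \<in> carrier RG"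
  show "x \<otimes>\<^bsub>RG\<^esub> y \<otimes>\<^bsub>RG\<^esub> z = x \<otimes>\<^bsub>RG\<^esub> (y \<otimes>\<^bsub>RG\<^esub> z)"
    by (simp add: mult_RG comp_assoc)
next
  fix x assume "x \<in> carrier RG"
  show "\<one>\<^bsub>RG\<^esub> \<otimes>\<^bsub>RG\<^esub> x = x" by (simp add: mult_RG one_RG)
next
  fix x assume x: "x \<in> carrier RG"
  obtain gx where gx: "homeomorphism UNIV UNIV x gx" using x by (auto simp: in_RG)
  have "homeomorphism UNIV UNIV gx x" using gx by (rule homeomorphism_symD)
  moreover have "rational_map gx" using rational_inverse[OF gx] x by (simp add: in_RG)
  ultimately have "gx \<in> carrier RG" by (auto simp: in_RG)
  moreover have "gx \<circ> x = id" using gx by (auto simp: homeomorphism_def fun_eq_iff)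
  ultimately show "\<exists>y\<in>carrier RG. y \<otimes>\<^bsub>RG\<^esub> x = \<one>\<^bsub>RG\<^esub>" by (auto simp: mult_RG one_RG)
qed

interpretation RG: group RG by (rule group_RG)

lemma mk_RG:
  assumes "rational_map f" "rational_map g" "\<And>x. g (f x) = x" "\<And>y. f (g y) = y"
  shows "f \<in> carrier RG" "g \<in> carrier RG" "inv\<^bsub>RG\<^esub> f = g"
proof -
  have h: "homeomorphism UNIV UNIV f g"
    using assms rational_cont by (intro homeomorphismI) auto
  then show f: "f \<in> carrier RG" using assms by (auto simp: in_RG)
  have "homeomorphism UNIV UNIV g f" using h by (rule homeomorphism_symD)
  then show g: "g \<in> carrier RG" using assms by (auto simp: in_RG)
  have "g \<otimes>\<^bsub>RG\<^esub> f = \<one>\<^bsub>RG\<^esub>" using assms by (simp add: mult_RG one_RG fun_eq_iff)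
  then show "inv\<^bsub>RG\<^esub> f = g" using f g by (rule RG.inv_equality)
qed

lemma inv_RG_apply:
  assumes "f \<in> carrier RG"
  shows "\<And>x. f ((inv\<^bsub>RG\<^esub> f) x) = x" "\<And>x. (inv\<^bsub>RG\<^esub> f) (f x) = x"
proof -
  have "f \<otimes>\<^bsub>RG\<^esub> inv\<^bsub>RG\<^esub> f = \<one>\<^bsub>RG\<^esub>" "inv\<^bsub>RG\<^esub> f \<otimes>\<^bsub>RG\<^esub> f = \<one>\<^bsub>RG\<^esub>"
    using assms by simp_all
  then show "\<And>x. f ((inv\<^bsub>RG\<^esub> f) x) = x" "\<And>x. (inv\<^bsub>RG\<^esub> f) (f x) = x"
    by (simp_all add: mult_RG one_RG fun_eq_iff)
qed

lemma RG_cont: "f \<in> carrier RG \<Longrightarrow> continuous_on UNIV f"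
  by (auto simp: in_RG rational_cont)

definition bt :: "nat \<Rightarrow> ('s \<Rightarrow> bool \<Rightarrow> 's) \<Rightarrow> (bool list \<Rightarrow> 's) \<Rightarrow> (bool list + 's) \<Rightarrow> bool \<Rightarrow> (bool list + 's)" where
  "bt L t st s a = (case s of Inl w \<Rightarrow> (if Suc (length w) < L then Inl (w @ [a]) else Inr (st (w @ [a])))
                              | Inr p \<Rightarrow> Inr (t p a))"

definition bo :: "nat \<Rightarrow> ('s \<Rightarrow> bool \<Rightarrow> bool list) \<Rightarrow> (bool list \<Rightarrow> bool list) \<Rightarrow> (bool list + 's) \<Rightarrow> bool \<Rightarrow> bool list" where
  "bo L out E s a = (case s of Inl w \<Rightarrow> (if Suc (length w) < L then [] else E (w @ [a]))
                              | Inr p \<Rightarrow> out p a)"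

lemma bt_Inl: "bt L t st (Inl w) a = (if Suc (length w) < L then Inl (w @ [a]) else Inr (st (w @ [a])))"
  and bt_Inr: "bt L t st (Inr p) a = Inr (t p a)"
  and bo_Inl: "bo L out E (Inl w) a = (if Suc (length w) < L then [] else E (w @ [a]))"
  and bo_Inr: "bo L out E (Inr p) a = out p a"
  by (simp_all add: bt_def bo_def)

lemma pre_add: "pre x (L + k) = pre x L @ pre (shift L x) k"
  by (auto simp: list_eq_iff_nth_eq nth_append shift_def)

lemma bt_run:
  assumes L: "1 \<le> L"
  shows "foldl (bt L t st) (Inl []) (pre x n) = (if n < L then Inl (pre x n) else Inr (foldl t (st (pre x L)) (pre (shift L x) (n - L))))
    \<and> lout (bt L t st) (bo L out E) (Inl []) (pre x n) = (if n < L then [] else E (pre x L) @ lout t out (st (pre x L)) (pre (shift L x) (n - L)))"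
proof (induction n)
  case 0 then show ?case using L by simp
next
  case (Suc n)
  show ?case
  proof (cases "Suc n < L")
    case True
    then have "n < L" by simp
    then show ?thesis using Suc True by (simp add: pre_Suc lout_snoc bt_Inl bt_Inr bo_Inl bo_Inr)
  next
    case False
    show ?thesis
    proof (cases "n < L")
      case True
      then have nL: "L = Suc n" using False by simp
      have IH: "foldl (bt L t st) (Inl []) (pre x n) = Inl (pre x n)" "lout (bt L t st) (bo L out E) (Inl []) (pre x n) = []"
        using Suc True by simp_all
      show ?thesis unfolding nL using IH[unfolded nL] by (simp add: pre_Suc lout_snoc bt_Inl bt_Inr bo_Inl bo_Inr)
    next
      case False
      then have "Suc n - L = Suc (n - L)" by simp
      moreover have "shift L x (n - L) = x n" using False by (simp add: shift_def)
      ultimately show ?thesis using Suc False \<open>\<not> Suc n < L\<close>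
        by (simp add: pre_Suc lout_snoc bt_Inl bt_Inr bo_Inl bo_Inr)
    qed
  qed
qed

lemma computes_bt:
  assumes L: "1 \<le> L"
    and ok1: "\<And>x k. prefixof (E (pre x L) @ lout t out (st (pre x L)) (pre (shift L x) k)) (m x)"
    and ok2: "\<And>x M. \<exists>k. M \<le> length (lout t out (st (pre x L)) (pre (shift L x) k))"
  shows "computes (bt L t st) (bo L out E) (Inl []) m"
  unfolding computes_def
proof (intro allI conjI)
  fix x n
  show "prefixof (lout (bt L t st) (bo L out E) (Inl []) (pre x n)) (m x)"
    using bt_run[OF L, of t st x n out E] ok1[of x "n - L"] by (simp add: prefixof_def)
next
  fix x M
  obtain k where k: "M \<le> length (lout t out (st (pre x L)) (pre (shift L x) k))" using ok2 by blast
  have "lout (bt L t st) (bo L out E) (Inl []) (pre x (L + k)) = E (pre x L) @ lout t out (st (pre x L)) (pre (shift L x) k)"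
    using bt_run[OF L, of t st x "L + k" out E] by simp
  then show "\<exists>n. M \<le> length (lout (bt L t st) (bo L out E) (Inl []) (pre x n))"
    using k by (intro exI[of _ "L + k"]) simp
qed

lemma fin_bt:
  assumes L: "1 \<le> L" and fin: "finite (range (\<lambda>(w, v). foldl t (st w) v))"
  shows "finite (range (foldl (bt L t st) (Inl [])))"
proof -
  define Q where "Q = range (\<lambda>(w, v). foldl t (st w) v)"
  define J where "J = Inl ` {w. set w \<subseteq> (UNIV :: bool set) \<and> length w \<le> L} \<union> Inr ` Q"
  define I where "I = Inl ` {w :: bool list. length w < L} \<union> Inr ` Q"
  have fJ: "finite J" unfolding J_def Q_def using fin finite_lists_length_le[of "UNIV::bool set" L] by simp
  have IJ: "I \<subseteq> J" unfolding I_def J_def by auto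
  have inv: "bt L t st s a \<in> I" if s: "s \<in> I" for s a
  proof -
    from s consider (l) w where "s = Inl w" "length w < L" | (r) p where "s = Inr p" "p \<in> Q"
      unfolding I_def by blast
    then show ?thesis
    proof cases
      case l
      show ?thesis
      proof (cases "Suc (length w) < L")
        case True then show ?thesis using l by (simp add: bt_def I_def)
      next
        case False
        have "st (w @ [a]) = (\<lambda>(w, v). foldl t (st w) v) (w @ [a], [])" by simp
        then have "st (w @ [a]) \<in> Q" unfolding Q_def by (rule range_eqI)
        then show ?thesis using l False by (simp add: bt_def I_def)
      qed
    next
      case r
      then obtain w v where "p = foldl t (st w) v" unfolding Q_def by auto
      then have "t p a = (\<lambda>(w, v). foldl t (st w) v) (w, v @ [a])" by simp
      then have "t p a \<in> Q" unfolding Q_def by (rule range_eqI)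
      then show ?thesis using r by (simp add: bt_def I_def)
    qed
  qed
  have "foldl (bt L t st) s v \<in> I" if "s \<in> I" for s v
    using that
  proof (induction v arbitrary: s)
    case Nil then show ?case by simp
  next
    case (Cons a v)
    then show ?case using inv[of s a] by simp
  qed
  moreover have "Inl [] \<in> I" using L by (simp add: I_def)
  ultimately have "range (foldl (bt L t st) (Inl [])) \<subseteq> I" by blast
  then show ?thesis using fJ IJ by (meson finite_subset)
qed

lemma lout_idt: "lout (\<lambda>s a. s) (\<lambda>s a. [a]) s v = v"
  by (induction v) auto

lemma lout_idu: "lout (\<lambda>s a. ()) (\<lambda>s a. [a]) () v = v"
  by (induction v) auto

lemma rational_pb:
  fixes F :: "bool list \<Rightarrow> bool list"
  assumes L: "1 \<le> L"
  shows "rational_map (\<lambda>x. app (F (pre x L)) (shift L x))"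
proof -
  let ?t = "\<lambda>(s::unit) a. s" and ?o = "\<lambda>(s::unit) a. [a]" and ?st = "\<lambda>w::bool list. ()"
  have c: "computes (bt L ?t ?st) (bo L ?o F) (Inl []) (\<lambda>x. app (F (pre x L)) (shift L x))"
  proof (rule computes_bt[OF L])
    fix x k
    have "prefixof (pre (app (F (pre x L)) (shift L x)) (length (F (pre x L)) + k)) (app (F (pre x L)) (shift L x))"
      by (rule prefixof_pre_iff)
    then show "prefixof (F (pre x L) @ lout ?t ?o (?st (pre x L)) (pre (shift L x) k)) (app (F (pre x L)) (shift L x))"
      by (simp add: lout_idt lout_idu pre_app)
  next
    fix x M
    show "\<exists>k. M \<le> length (lout ?t ?o (?st (pre x L)) (pre (shift L x) k))"
      by (intro exI[of _ M]) (simp add: lout_idt lout_idu)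
  qed
  have "finite (range (\<lambda>(w, v). foldl ?t (?st w) v))" by (rule finite_subset[of _ UNIV]) auto
  then have "finite (range (foldl (bt L ?t ?st) (Inl [])))" by (rule fin_bt[OF L])
  then show ?thesis using c by (rule computes_rational_map)
qed

lemma tail_unb:
  assumes c: "computes t out s f"
  shows "\<exists>k. M \<le> length (lout t out (foldl t s (pre x L)) (pre (shift L x) k))"
proof -
  obtain N where N: "M + length (lout t out s (pre x L)) \<le> length (lout t out s (pre x N))"
    using c unfolding computes_def by blast
  define N' where "N' = max N L"
  have "length (lout t out s (pre x N)) \<le> length (lout t out s (pre x N'))"
    by (rule lout_pre_mono) (simp add: N'_def)
  moreover have "N' = L + (N' - L)" by (simp add: N'_def)
  then have "lout t out s (pre x N') = lout t out s (pre x L) @ lout t out (foldl t s (pre x L)) (pre (shift L x) (N' - L))"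
    by (metis pre_add lout_append)
  ultimately show ?thesis using N by (intro exI[of _ "N' - L"]) simp
qed

definition tsum :: "('p \<Rightarrow> bool \<Rightarrow> 'p) \<Rightarrow> ('q \<Rightarrow> bool \<Rightarrow> 'q) \<Rightarrow> ('p + 'q) \<Rightarrow> bool \<Rightarrow> ('p + 'q)" where
  "tsum t1 t2 s a = (case s of Inl p \<Rightarrow> Inl (t1 p a) | Inr q \<Rightarrow> Inr (t2 q a))"
definition osum :: "('p \<Rightarrow> bool \<Rightarrow> bool list) \<Rightarrow> ('q \<Rightarrow> bool \<Rightarrow> bool list) \<Rightarrow> ('p + 'q) \<Rightarrow> bool \<Rightarrow> bool list" where
  "osum o1 o2 s a = (case s of Inl p \<Rightarrow> o1 p a | Inr q \<Rightarrow> o2 q a)"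

lemma foldl_tsum: "foldl (tsum t1 t2) (Inl p) v = Inl (foldl t1 p v)" "foldl (tsum t1 t2) (Inr q) v = Inr (foldl t2 q v)"
  by (induction v arbitrary: p q) (simp_all add: tsum_def)

lemma lout_tsum: "lout (tsum t1 t2) (osum o1 o2) (Inl p) v = lout t1 o1 p v"
  "lout (tsum t1 t2) (osum o1 o2) (Inr q) v = lout t2 o2 q v"
  by (induction v arbitrary: p q) (simp_all add: tsum_def osum_def)

lemma rational_piecewise:
  assumes r1: "rational_map f1" and r2: "rational_map f2" and L: "1 \<le> L"
  shows "rational_map (\<lambda>x. if P (pre x L) then f1 x else f2 x)"
proof -
  obtain t1 :: "nat \<Rightarrow> bool \<Rightarrow> nat" and o1 s1 where T1: "finite (range (foldl t1 s1))" "computes t1 o1 s1 f1"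
    using rational_map_computes[OF r1] by blast
  obtain t2 :: "nat \<Rightarrow> bool \<Rightarrow> nat" and o2 s2 where T2: "finite (range (foldl t2 s2))" "computes t2 o2 s2 f2"
    using rational_map_computes[OF r2] by blast
  define st where "st = (\<lambda>w. if P w then Inl (foldl t1 s1 w) else Inr (foldl t2 s2 w) :: nat + nat)"
  define E where "E = (\<lambda>w. if P w then lout t1 o1 s1 w else lout t2 o2 s2 w)"
  let ?m = "\<lambda>x. if P (pre x L) then f1 x else f2 x"
  have c: "computes (bt L (tsum t1 t2) st) (bo L (osum o1 o2) E) (Inl []) ?m"
  proof (rule computes_bt[OF L])
    fix x k
    show "prefixof (E (pre x L) @ lout (tsum t1 t2) (osum o1 o2) (st (pre x L)) (pre (shift L x) k)) (?m x)"
    proof (cases "P (pre x L)")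
      case True
      have "E (pre x L) @ lout (tsum t1 t2) (osum o1 o2) (st (pre x L)) (pre (shift L x) k) = lout t1 o1 s1 (pre x (L + k))"
        using True by (simp add: E_def st_def lout_tsum pre_add lout_append)
      then show ?thesis using True T1(2) by (simp add: computes_def)
    next
      case False
      have "E (pre x L) @ lout (tsum t1 t2) (osum o1 o2) (st (pre x L)) (pre (shift L x) k) = lout t2 o2 s2 (pre x (L + k))"
        using False by (simp add: E_def st_def lout_tsum pre_add lout_append)
      then show ?thesis using False T2(2) by (simp add: computes_def)
    qed
  next
    fix x M
    show "\<exists>k. M \<le> length (lout (tsum t1 t2) (osum o1 o2) (st (pre x L)) (pre (shift L x) k))"
    proof (cases "P (pre x L)")
      case True then show ?thesis using tail_unb[OF T1(2), of M x L] by (simp add: st_def lout_tsum)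
    next
      case False then show ?thesis using tail_unb[OF T2(2), of M x L] by (simp add: st_def lout_tsum)
    qed
  qed
  have "range (\<lambda>(w, v). foldl (tsum t1 t2) (st w) v) \<subseteq> Inl ` range (foldl t1 s1) \<union> Inr ` range (foldl t2 s2)"
  proof
    fix z assume "z \<in> range (\<lambda>(w, v). foldl (tsum t1 t2) (st w) v)"
    then obtain w v where z: "z = foldl (tsum t1 t2) (st w) v" by auto
    show "z \<in> Inl ` range (foldl t1 s1) \<union> Inr ` range (foldl t2 s2)"
    proof (cases "P w")
      case True
      then have "z = Inl (foldl t1 s1 (w @ v))" by (simp add: z st_def foldl_tsum)
      then show ?thesis by blast
    next
      case False
      then have "z = Inr (foldl t2 s2 (w @ v))" by (simp add: z st_def foldl_tsum)
      then show ?thesis by blast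
    qed
  qed
  then have "finite (range (\<lambda>(w, v). foldl (tsum t1 t2) (st w) v))"
    using T1(1) T2(1) by (meson finite_UnI finite_imageI finite_subset)
  then have "finite (range (foldl (bt L (tsum t1 t2) st) (Inl [])))" by (rule fin_bt[OF L])
  then show ?thesis using c by (rule computes_rational_map)
qed

definition lz :: "cantor \<Rightarrow> nat" where "lz x = (LEAST i. x i)"

definition phi :: "(cantor \<Rightarrow> cantor) \<Rightarrow> cantor \<Rightarrow> cantor" where
  "phi H x = (if (\<exists>i. x i) \<and> \<not> x 0 then app (replicate (lz x - 1) False) (H (shift (lz x - 1) x)) else x)"

lemma lz_eq: "x k \<Longrightarrow> (\<forall>i<k. \<not> x i) \<Longrightarrow> lz x = k"
  unfolding lz_def by (rule Least_equality) (auto simp: not_less[symmetric])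

lemma lz_props: "\<exists>i. x i \<Longrightarrow> x (lz x) \<and> (\<forall>i<lz x. \<not> x i)"
  unfolding lz_def by (metis LeastI_ex not_less_Least)

definition ptt :: "('s \<Rightarrow> bool \<Rightarrow> 's) \<Rightarrow> 's \<Rightarrow> (nat + 's) \<Rightarrow> bool \<Rightarrow> (nat + 's)" where
  "ptt t s q a = (case q of Inl n \<Rightarrow> (if n = 0 then (if a then Inl 2 else Inl 1)
       else if n = 1 then (if a then Inr (foldl t s [False, True]) else Inl 1) else Inl 2)
     | Inr p \<Rightarrow> Inr (t p a))"

definition pto :: "('s \<Rightarrow> bool \<Rightarrow> 's) \<Rightarrow> ('s \<Rightarrow> bool \<Rightarrow> bool list) \<Rightarrow> 's \<Rightarrow> (nat + 's) \<Rightarrow> bool \<Rightarrow> bool list" where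
  "pto t out s q a = (case q of Inl n \<Rightarrow> (if n = 0 then (if a then [True] else [])
       else if n = 1 then (if a then lout t out s [False, True] else [False]) else [a])
     | Inr p \<Rightarrow> out p a)"

context
  fixes t :: "'s \<Rightarrow> bool \<Rightarrow> 's" and out :: "'s \<Rightarrow> bool \<Rightarrow> bool list" and s :: 's
begin

lemma ptt_simps:
  "ptt t s (Inl 0) a = (if a then Inl 2 else Inl (Suc 0))"
  "ptt t s (Inl (Suc 0)) a = (if a then Inr (foldl t s [False, True]) else Inl (Suc 0))"
  "ptt t s (Inl 2) a = Inl 2"
  "ptt t s (Inr p) a = Inr (t p a)"
  "pto t out s (Inl 0) a = (if a then [True] else [])"
  "pto t out s (Inl (Suc 0)) a = (if a then lout t out s [False, True] else [False])"
  "pto t out s (Inl 2) a = [a]"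
  "pto t out s (Inr p) a = out p a"
  by (simp_all add: ptt_def pto_def)

lemma run_Inr: "foldl (ptt t s) (Inr p) v = Inr (foldl t p v)" "lout (ptt t s) (pto t out s) (Inr p) v = lout t out p v"
  by (induction v arbitrary: p) (simp_all add: ptt_simps)

lemma run_2: "foldl (ptt t s) (Inl 2) v = Inl 2" "lout (ptt t s) (pto t out s) (Inl 2) v = v"
  by (induction v) (simp_all add: ptt_simps)

lemma run_1: "foldl (ptt t s) (Inl (Suc 0)) (replicate j False) = Inl (Suc 0)"
  "lout (ptt t s) (pto t out s) (Inl (Suc 0)) (replicate j False) = replicate j False"
  by (induction j) (simp_all add: ptt_simps)

lemma run_1T: "lout (ptt t s) (pto t out s) (Inl (Suc 0)) (True # w) = lout t out s (False # True # w)"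
proof -
  have a: "pto t out s (Inl (Suc 0)) True = lout t out s [False, True]" by (simp add: pto_def)
  have b: "ptt t s (Inl (Suc 0)) True = Inr (foldl t s [False, True])" by (simp add: ptt_def)
  have "lout (ptt t s) (pto t out s) (Inl (Suc 0)) (True # w) = lout t out s [False, True] @ lout t out (foldl t s [False, True]) w"
    by (simp only: lout.simps a b run_Inr)
  also have "\<dots> = lout t out s ([False, True] @ w)" by (simp only: lout_append)
  finally show ?thesis by simp
qed

lemma run_start:
  "lout (ptt t s) (pto t out s) (Inl 0) (True # w) = True # w"
  "lout (ptt t s) (pto t out s) (Inl 0) (False # replicate j False) = replicate j False"
  "lout (ptt t s) (pto t out s) (Inl 0) (False # replicate j False @ True # w) = replicate j False @ lout t out s (False # True # w)"
proof -
  show "lout (ptt t s) (pto t out s) (Inl 0) (True # w) = True # w"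
    by (simp add: ptt_simps run_2)
  show "lout (ptt t s) (pto t out s) (Inl 0) (False # replicate j False) = replicate j False"
    using run_1 by (simp add: ptt_simps)
  have "lout (ptt t s) (pto t out s) (Inl (Suc 0)) (replicate j False @ True # w) = replicate j False @ lout t out s (False # True # w)"
    by (simp only: lout_append run_1 run_1T)
  then show "lout (ptt t s) (pto t out s) (Inl 0) (False # replicate j False @ True # w) = replicate j False @ lout t out s (False # True # w)"
    by (simp add: ptt_simps)
qed

lemma fin_ptt:
  assumes "finite (range (foldl t s))"
  shows "finite (range (foldl (ptt t s) (Inl 0)))"
proof -
  define I where "I = Inl ` {0::nat, Suc 0, 2} \<union> Inr ` range (foldl t s)"
  have fI: "finite I" using assms by (simp add: I_def)
  have fT: "t (t s False) True \<in> range (foldl t s)" using rangeI[of "foldl t s" "[False,True]"] by simp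
  have inv: "ptt t s q a \<in> I" if "q \<in> I" for q a
  proof -
    from that consider "q = Inl 0" | "q = Inl (Suc 0)" | "q = Inl 2" | p where "q = Inr p" "p \<in> range (foldl t s)"
      unfolding I_def by blast
    then show ?thesis
    proof cases
      case 4
      then obtain v where "p = foldl t s v" by blast
      then have "t p a = foldl t s (v @ [a])" by simp
      then have "t p a \<in> range (foldl t s)" by (metis rangeI)
      then show ?thesis using 4 by (simp add: I_def ptt_simps)
    qed (auto simp: I_def ptt_simps fT)
  qed
  have "foldl (ptt t s) q v \<in> I" if "q \<in> I" for q v
    using that by (induction v arbitrary: q) (simp_all add: inv)
  then have "range (foldl (ptt t s) (Inl 0)) \<subseteq> I" by (auto simp: I_def)
  then show ?thesis using fI by (rule finite_subset)
qed

end

lemma pre_Suc0: "pre x (Suc m) = x 0 # pre (shift 1 x) m"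
  by (simp add: list_eq_iff_nth_eq nth_Cons shift_def split: nat.split)

lemma pre_repl: "(\<forall>i<n. \<not> x i) \<Longrightarrow> pre x n = replicate n False"
  by (simp add: list_eq_iff_nth_eq)

lemma prefixof_app_append: "prefixof l2 y \<Longrightarrow> prefixof (l1 @ l2) (app l1 y)"
  by (auto simp: prefixof_def nth_append app_def)

lemma prefixof_Nil[simp]: "prefixof [] y"
  by (simp add: prefixof_def)

lemma pre_decomp:
  assumes "1 \<le> k" "x k" "\<forall>i<k. \<not> x i"
  shows "pre x (Suc (k + j)) = False # replicate (k - 1) False @ True # pre (shift (k + 1) x) j"
    "pre (shift (k - 1) x) (2 + j) = False # True # pre (shift (k + 1) x) j"
proof -
  have "pre x (k + 1) = pre x k @ [x k]" by (simp add: pre_Suc)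
  also have "\<dots> = replicate k False @ [True]" using assms by (simp add: pre_repl)
  also have "\<dots> = False # replicate (k - 1) False @ [True]" using assms(1)
    by (metis Suc_diff_1 One_nat_def less_eq_Suc_le replicate_Suc append_Cons)
  finally have a: "pre x (k + 1) = False # replicate (k - 1) False @ [True]" .
  have "pre x (Suc (k + j)) = pre x ((k + 1) + j)" by simp
  also have "\<dots> = pre x (k + 1) @ pre (shift (k + 1) x) j" by (rule pre_add)
  finally show "pre x (Suc (k + j)) = False # replicate (k - 1) False @ True # pre (shift (k + 1) x) j"
    using a by simp
  have b: "pre (shift (k - 1) x) 2 = [False, True]"
    using assms by (simp add: pre_def shift_def numeral_2_eq_2)
  have c: "shift 2 (shift (k - 1) x) = shift (k + 1) x" using assms(1) by (simp add: shift_shift)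
  show "pre (shift (k - 1) x) (2 + j) = False # True # pre (shift (k + 1) x) j"
    using pre_add[of "shift (k - 1) x" 2 j] b c by simp
qed

lemma computes_phi:
  assumes c: "computes t out s H"
  shows "computes (ptt t s) (pto t out s) (Inl 0) (phi H)"
  unfolding computes_def
proof (intro allI)
  fix x
  let ?lo = "lout (ptt t s) (pto t out s) (Inl 0)"
  show "(\<forall>n. prefixof (?lo (pre x n)) (phi H x)) \<and> (\<forall>M. \<exists>n. M \<le> length (?lo (pre x n)))"
  proof (cases "x 0")
    case True
    then have ph: "phi H x = x" by (simp add: phi_def)
    have lo: "?lo (pre x n) = pre x n" for n
    proof (cases n)
      case (Suc m) then show ?thesis using True by (simp add: pre_Suc0 run_start del: lout.simps)
    qed simp
    show ?thesis by (simp add: ph lo prefixof_pre_iff) (metis order_refl)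
  next
    case x0: False
    show ?thesis
    proof (cases "\<exists>i. x i")
      case False
      then have ph: "phi H x = x" by (simp add: phi_def)
      have lo: "?lo (pre x (Suc j)) = replicate j False" for j
        using x0 False by (simp add: pre_Suc0 pre_repl shift_def run_start del: lout.simps)
      have "prefixof (?lo (pre x n)) (phi H x)" for n
      proof (cases n)
        case (Suc j) then show ?thesis using lo False by (simp add: ph prefixof_def)
      qed simp
      moreover have "\<exists>n. M \<le> length (?lo (pre x n))" for M
        using lo by (intro exI[of _ "Suc M"]) simp
      ultimately show ?thesis by blast
    next
      case True
      define k where "k = lz x"
      have kp: "x k" "\<forall>i<k. \<not> x i" using lz_props[OF True] by (simp_all add: k_def)
      have k1: "1 \<le> k" using kp x0 by (cases k) auto
      have ph: "phi H x = app (replicate (k - 1) False) (H (shift (k - 1) x))"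
        using True x0 by (simp add: phi_def k_def)
      have lo2: "?lo (pre x (Suc (k + j))) = replicate (k - 1) False @ lout t out s (pre (shift (k - 1) x) (2 + j))" for j
        using pre_decomp[OF k1 kp, of j] by (simp add: run_start del: lout.simps)
      have lo1: "?lo (pre x (Suc j)) = replicate j False" if "j < k" for j
      proof -
        have "\<forall>i<Suc j. \<not> x i" using kp that by auto
        then have "pre x (Suc j) = False # replicate j False" by (simp add: pre_repl)
        then show ?thesis by (simp add: run_start del: lout.simps)
      qed
      have "prefixof (?lo (pre x n)) (phi H x)" for n
      proof (cases n)
        case (Suc j)
        show ?thesis
        proof (cases "j < k")
          case True
          then show ?thesis using Suc lo1 by (simp add: ph prefixof_def nth_append)
        next
          case False
          then have "Suc j = Suc (k + (j - k))" by simp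
          then have "?lo (pre x n) = replicate (k - 1) False @ lout t out s (pre (shift (k - 1) x) (2 + (j - k)))"
            using lo2 Suc by metis
          moreover have "prefixof (lout t out s (pre (shift (k - 1) x) (2 + (j - k)))) (H (shift (k - 1) x))"
            using c by (simp add: computes_def)
          ultimately show ?thesis by (simp add: ph prefixof_app_append)
        qed
      qed simp
      moreover have "\<exists>n. M \<le> length (?lo (pre x n))" for M
      proof -
        obtain N where N: "M \<le> length (lout t out s (pre (shift (k - 1) x) N))"
          using c unfolding computes_def by blast
        have "length (lout t out s (pre (shift (k - 1) x) N)) \<le> length (lout t out s (pre (shift (k - 1) x) (2 + N)))"
          by (rule lout_pre_mono) simp
        then show ?thesis using N lo2[of N] by (intro exI[of _ "Suc (k + N)"]) simp
      qed
      ultimately show ?thesis by blast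
    qed
  qed
qed

lemma rational_phi: assumes "rational_map H" shows "rational_map (phi H)"
proof -
  obtain t :: "nat \<Rightarrow> bool \<Rightarrow> nat" and out s where ts: "finite (range (foldl t s))" "computes t out s H"
    using rational_map_computes[OF assms] by blast
  show ?thesis using computes_rational_map[OF fin_ptt[OF ts(1)] computes_phi[OF ts(2)]] .
qed

definition sig :: "cantor \<Rightarrow> cantor" where
  "sig x = (if \<not> x 0 then app [False] x else if \<not> x 1 then app [False, True] (shift 2 x) else shift 1 x)"

definition tau :: "cantor \<Rightarrow> cantor" where
  "tau x = (if \<not> x 0 \<and> \<not> x 1 then shift 1 x else if \<not> x 0 then app [True, False] (shift 2 x) else app [True] x)"

lemma app1_nth: "app [a] y 0 = a" "app [a] y (Suc i) = y i"
  by (simp_all add: app_def)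

lemma app2_nth: "app [a, b] y 0 = a" "app [a, b] y (Suc 0) = b" "app [a, b] y (Suc (Suc i)) = y i"
  by (simp_all add: app_def)

lemma shift_nth: "shift k x i = x (i + k)"
  by (simp add: shift_def)

lemma fun_eq_cases:
  fixes p q :: cantor
  assumes "p 0 = q 0" "p (Suc 0) = q (Suc 0)" "\<And>i. p (Suc (Suc i)) = q (Suc (Suc i))"
  shows "p = q"
proof (rule ext)
  fix i show "p i = q i"
    using assms by (cases i; cases "i - 1") auto
qed

lemma sig_tau: "sig (tau x) = x"
  by (rule fun_eq_cases) (auto simp: sig_def tau_def app1_nth app2_nth shift_nth)

lemma tau_sig: "tau (sig x) = x"
  by (rule fun_eq_cases) (auto simp: sig_def tau_def app1_nth app2_nth shift_nth)

lemma sig_pb: "sig = (\<lambda>x. app ((\<lambda>w. if \<not> w ! 0 then [False, False, w ! 1] else if \<not> w ! 1 then [False, True] else [True]) (pre x 2)) (shift 2 x))"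
proof (rule ext)
  fix x
  have p: "pre x 2 ! 0 = x 0" "pre x 2 ! 1 = x 1" by simp_all
  show "sig x = app ((\<lambda>w. if \<not> w ! 0 then [False, False, w ! 1] else if \<not> w ! 1 then [False, True] else [True]) (pre x 2)) (shift 2 x)"
    unfolding p
    by (rule fun_eq_cases) (auto simp: sig_def app1_nth app2_nth shift_nth app_def)
qed

lemma tau_pb: "tau = (\<lambda>x. app ((\<lambda>w. if \<not> w ! 0 \<and> \<not> w ! 1 then [False] else if \<not> w ! 0 then [True, False] else [True, True, w ! 1]) (pre x 2)) (shift 2 x))"
proof (rule ext)
  fix x
  have p: "pre x 2 ! 0 = x 0" "pre x 2 ! 1 = x 1" by simp_all
  show "tau x = app ((\<lambda>w. if \<not> w ! 0 \<and> \<not> w ! 1 then [False] else if \<not> w ! 0 then [True, False] else [True, True, w ! 1]) (pre x 2)) (shift 2 x)"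
    unfolding p
    by (rule fun_eq_cases) (auto simp: tau_def app1_nth app2_nth shift_nth app_def)
qed

lemma sig_RG: "sig \<in> carrier RG" "tau \<in> carrier RG" "inv\<^bsub>RG\<^esub> sig = tau"
proof -
  have "rational_map sig" unfolding sig_pb by (rule rational_pb) simp
  moreover have "rational_map tau" unfolding tau_pb by (rule rational_pb) simp
  ultimately show "sig \<in> carrier RG" "tau \<in> carrier RG" "inv\<^bsub>RG\<^esub> sig = tau"
    using mk_RG[of sig tau] tau_sig sig_tau by auto
qed

definition In01 :: "cantor \<Rightarrow> bool" where "In01 y \<longleftrightarrow> \<not> y 0 \<and> y 1"

lemma maps01:
  assumes supp: "\<And>y. \<not> In01 y \<Longrightarrow> H y = y" and inv: "\<And>y. H' (H y) = y" and y: "In01 y"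
  shows "In01 (H y)"
proof (rule ccontr)
  assume "\<not> In01 (H y)"
  then have "H (H y) = H y" by (rule supp)
  then have "H' (H (H y)) = H' (H y)" by simp
  then have "H y = y" by (simp add: inv)
  then show False using \<open>\<not> In01 (H y)\<close> y by simp
qed

lemma phi_fix: "x 0 \<or> (\<forall>i. \<not> x i) \<Longrightarrow> phi H x = x"
  by (auto simp: phi_def)

lemma phi_01: "In01 x \<Longrightarrow> phi H x = H x"
proof -
  assume a: "In01 x"
  then have "lz x = 1" by (intro lz_eq) (auto simp: In01_def)
  then show ?thesis using a by (auto simp: phi_def In01_def)
qed

lemma app_repl_Suc: "app [False] (app (replicate j False) y) = app (replicate (Suc j) False) y"
  by (simp add: app_append[symmetric])

lemma phi_00:
  assumes "\<not> x 0" "\<not> x 1"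
  shows "phi H x = app [False] (phi H (shift 1 x))"
proof (cases "\<exists>i. x i")
  case False
  then have "phi H x = x" "phi H (shift 1 x) = shift 1 x" by (auto simp: phi_def shift_def)
  moreover have "app [False] (shift 1 x) = x"
    using assms by (intro fun_eq_cases) (simp_all add: app1_nth shift_nth)
  ultimately show ?thesis by simp
next
  case True
  define k where "k = lz x"
  have kp: "x k" "\<forall>i<k. \<not> x i" using lz_props[OF True] by (simp_all add: k_def)
  have k2: "2 \<le> k" using kp assms by (cases k; cases "k - 1") auto
  have "shift 1 x (k - 1)" using kp k2 by (simp add: shift_def)
  then have s1: "\<exists>i. shift 1 x i" "\<not> shift 1 x 0" using assms by (auto simp: shift_def)
  have lz1: "lz (shift 1 x) = k - 1"
    using kp k2 by (intro lz_eq) (auto simp: shift_def)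
  obtain m where km: "k = Suc (Suc m)" using k2 by (metis add_2_eq_Suc le_Suc_ex)
  have "phi H (shift 1 x) = app (replicate (k - 2) False) (H (shift (k - 1) x))"
    using s1 lz1 by (simp add: phi_def shift_shift km)
  moreover have "phi H x = app (replicate (k - 1) False) (H (shift (k - 1) x))"
    using True assms by (simp add: phi_def k_def)
  moreover have "k - 1 = Suc (k - 2)" using k2 by simp
  ultimately show ?thesis by (simp add: app_repl_Suc)
qed

lemma phi_0:
  assumes m: "\<And>y. In01 y \<Longrightarrow> In01 (H y)" and x0: "\<not> x 0"
  shows "\<not> phi H x 0"
proof (cases "\<exists>i. x i")
  case False then show ?thesis using x0 by (simp add: phi_def)
next
  case True
  define k where "k = lz x"
  have kp: "x k" "\<forall>i<k. \<not> x i" using lz_props[OF True] by (simp_all add: k_def)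
  have ph: "phi H x = app (replicate (k - 1) False) (H (shift (k - 1) x))"
    using True x0 by (simp add: phi_def k_def)
  show ?thesis
  proof (cases "k = 1")
    case True
    then have "In01 x" using kp x0 by (simp add: In01_def)
    then have "In01 (H x)" by (rule m)
    then show ?thesis using ph True by (simp add: In01_def)
  next
    case False
    then have "0 < k - 1" using kp x0 by (cases k) auto
    then show ?thesis using ph by simp
  qed
qed

lemma phi_inv:
  assumes m: "\<And>y. In01 y \<Longrightarrow> In01 (H y)" and inv: "\<And>y. H' (H y) = y"
  shows "phi H' (phi H x) = x"
proof (cases "x 0 \<or> (\<forall>i. \<not> x i)")
  case True then show ?thesis by (simp add: phi_fix)
next
  case False
  then have x0: "\<not> x 0" and ex: "\<exists>i. x i" by auto
  define k where "k = lz x"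
  have kp: "x k" "\<forall>i<k. \<not> x i" using lz_props[OF ex] by (simp_all add: k_def)
  have k1: "1 \<le> k" using kp x0 by (cases k) auto
  define y where "y = shift (k - 1) x"
  have y01: "In01 y" using kp k1 by (simp add: In01_def y_def shift_def)
  then have hy: "In01 (H y)" by (rule m)
  define z where "z = app (replicate (k - 1) False) (H y)"
  have ph: "phi H x = z" using ex x0 by (simp add: phi_def k_def z_def y_def)
  have zk: "z k" using hy k1 app_ge[of "replicate (k - 1) False" "H y" 1] by (simp add: z_def In01_def)
  have zlt: "\<forall>i<k. \<not> z i"
  proof (intro allI impI)
    fix i assume "i < k"
    show "\<not> z i"
    proof (cases "i < k - 1")
      case True then show ?thesis by (simp add: z_def)
    next
      case False
      then have "i = length (replicate (k - 1) False) + 0" using \<open>i < k\<close> by simp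
      then show ?thesis using hy by (simp only: z_def app_ge) (simp add: In01_def)
    qed
  qed
  have lzz: "lz z = k" using zk zlt by (rule lz_eq)
  have z0: "\<not> z 0" using zlt k1 by simp
  have sz: "shift (k - 1) z = H y" using shift_app[of "replicate (k - 1) False" "H y"] by (simp add: z_def)
  have "phi H' z = app (replicate (k - 1) False) (H' (H y))"
    using zk z0 lzz sz by (auto simp: phi_def)
  also have "\<dots> = app (pre x (k - 1)) (shift (k - 1) x)"
    using kp by (simp add: inv y_def pre_repl)
  also have "\<dots> = x" by (rule app_pre_shift)
  finally show ?thesis using ph by simp
qed

lemma comm_id:
  assumes suppH: "\<And>y. \<not> In01 y \<Longrightarrow> H y = y" and suppH': "\<And>y. \<not> In01 y \<Longrightarrow> H' y = y"
    and i1: "\<And>y. H' (H y) = y" and i2: "\<And>y. H (H' y) = y"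
  shows "phi H (sig (phi H' (tau y))) = H y"
proof -
  have mH: "\<And>y. In01 y \<Longrightarrow> In01 (H y)" using maps01[OF suppH i1] .
  have mH': "\<And>y. In01 y \<Longrightarrow> In01 (H' y)" using maps01[OF suppH' i2] .
  consider (a) "In01 y" | (b) "y 0" | (c) "\<not> y 0" "\<not> y 1" unfolding In01_def by blast
  then show ?thesis
  proof cases
    case a
    then have t: "tau y = app [True, False] (shift 2 y)" by (simp add: tau_def In01_def)
    then have "phi H' (tau y) = tau y" by (intro phi_fix) (simp add: app2_nth)
    moreover have "sig (tau y) = y" by (rule sig_tau)
    ultimately show ?thesis using a by (simp add: phi_01)
  next
    case b
    then have "\<not> In01 y" by (simp add: In01_def)
    have t: "tau y = app [True] y" using b by (simp add: tau_def)
    then have "phi H' (tau y) = tau y" by (intro phi_fix) (simp add: app1_nth)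
    moreover have "sig (tau y) = y" by (rule sig_tau)
    moreover have "phi H y = y" using b by (simp add: phi_fix)
    ultimately show ?thesis using suppH[OF \<open>\<not> In01 y\<close>] by simp
  next
    case c
    then have "\<not> In01 y" by (simp add: In01_def)
    have t: "tau y = shift 1 y" using c by (simp add: tau_def)
    have s0: "\<not> shift 1 y 0" using c by (simp add: shift_def)
    have z0: "\<not> phi H' (shift 1 y) 0" using phi_0[of H' "shift 1 y"] mH' s0 by blast
    have "sig (phi H' (tau y)) = app [False] (phi H' (shift 1 y))"
      using z0 by (simp add: t sig_def)
    also have "\<dots> = phi H' y" using phi_00[OF c, of H'] by simp
    finally have "phi H (sig (phi H' (tau y))) = phi H (phi H' y)" by simp
    also have "\<dots> = y" by (rule phi_inv[OF mH' i2])
    finally show ?thesis using suppH[OF \<open>\<not> In01 y\<close>] by simp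
  qed
qed

lemma comm_01:
  assumes H: "H \<in> carrier RG" and supp: "\<And>y. \<not> In01 y \<Longrightarrow> H y = y"
  shows "H \<in> derived RG (carrier RG)"
proof -
  define H' where "H' = inv\<^bsub>RG\<^esub> H"
  have H'c: "H' \<in> carrier RG" using H by (simp add: H'_def)
  have i1: "\<And>y. H' (H y) = y" and i2: "\<And>y. H (H' y) = y"
    using inv_RG_apply[OF H] by (simp_all add: H'_def)
  have supp': "\<And>y. \<not> In01 y \<Longrightarrow> H' y = y"
  proof -
    fix y assume "\<not> In01 y"
    then have "H y = y" by (rule supp)
    then show "H' y = y" using i1[of y] by simp
  qed
  have mH: "\<And>y. In01 y \<Longrightarrow> In01 (H y)" using maps01[OF supp i1] .
  have mH': "\<And>y. In01 y \<Longrightarrow> In01 (H' y)" using maps01[OF supp' i2] .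
  have rH: "rational_map H" "rational_map H'" using H H'c by (simp_all add: in_RG)
  have pinv1: "\<And>x. phi H' (phi H x) = x" by (rule phi_inv[OF mH i1])
  have pinv2: "\<And>x. phi H (phi H' x) = x" by (rule phi_inv[OF mH' i2])
  note mk = mk_RG[OF rational_phi[OF rH(1)] rational_phi[OF rH(2)] pinv1 pinv2]
  define h where "h = phi H \<otimes>\<^bsub>RG\<^esub> sig \<otimes>\<^bsub>RG\<^esub> inv\<^bsub>RG\<^esub> (phi H) \<otimes>\<^bsub>RG\<^esub> inv\<^bsub>RG\<^esub> sig"
  have "h = phi H \<circ> sig \<circ> phi H' \<circ> tau"
    unfolding h_def by (simp only: mk(3) sig_RG(3) mult_RG)
  also have "\<dots> = H"
  proof (rule ext)
    fix y show "(phi H \<circ> sig \<circ> phi H' \<circ> tau) y = H y"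
      using comm_id[OF supp supp' i1 i2, of y] by simp
  qed
  finally have hH: "h = H" .
  have "h \<in> (\<Union>h2\<in>carrier RG. {phi H \<otimes>\<^bsub>RG\<^esub> h2 \<otimes>\<^bsub>RG\<^esub> inv\<^bsub>RG\<^esub> (phi H) \<otimes>\<^bsub>RG\<^esub> inv\<^bsub>RG\<^esub> h2})"
    unfolding h_def by (rule UN_I[OF sig_RG(1)]) simp
  then have "h \<in> derived_set RG (carrier RG)" by (rule UN_I[OF mk(1)])
  then have "h \<in> derived RG (carrier RG)" unfolding derived_def by (rule generate.incl)
  then show ?thesis by (simp add: hH)
qed

definition xorm :: "bool list \<Rightarrow> cantor \<Rightarrow> cantor" where
  "xorm u x = (\<lambda>i. if i < length u then x i \<noteq> u ! i else x i)"

lemma xorm_xorm: "xorm u (xorm u x) = x"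
  by (auto simp: xorm_def fun_eq_iff)

lemma xorm_pb: "u \<noteq> [] \<Longrightarrow> xorm u = (\<lambda>x. app ((\<lambda>w. map2 (\<noteq>) w u) (pre x (length u))) (shift (length u) x))"
  by (auto simp: xorm_def fun_eq_iff app_def shift_def)

lemma xorm_RG: "xorm u \<in> carrier RG"
proof (cases "u = []")
  case True
  then have "xorm u = id" by (simp add: xorm_def fun_eq_iff)
  then show ?thesis using RG.one_closed by (simp add: one_RG)
next
  case False
  then have r: "rational_map (xorm u)" unfolding xorm_pb[OF False] by (intro rational_pb) (simp add: Suc_leI)
  show ?thesis using mk_RG[OF r r xorm_xorm xorm_xorm] by simp
qed

lemma tau_pow_RG: "tau ^^ k \<in> carrier RG"
proof (induction k)
  case 0 then show ?case using RG.one_closed by (simp add: one_RG id_def)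
next
  case (Suc k)
  have "tau \<otimes>\<^bsub>RG\<^esub> (tau ^^ k) \<in> carrier RG" using sig_RG(2) Suc by simp
  then show ?case by (simp only: mult_RG funpow.simps(2))
qed

lemma tau_pow_1: "\<not> (\<forall>i<Suc k. \<not> y i) \<Longrightarrow> (tau ^^ k) y 0"
proof (induction k arbitrary: y)
  case 0 then show ?case by simp
next
  case (Suc k)
  have "\<not> (\<forall>i<Suc k. \<not> tau y i)"
  proof (cases "y 0")
    case True
    then have "tau y 0" by (simp add: tau_def app1_nth)
    then show ?thesis by blast
  next
    case y0: False
    show ?thesis
    proof (cases "y 1")
      case True
      then have "tau y 0" using y0 by (simp add: tau_def app2_nth)
      then show ?thesis by blast
    next
      case False
      obtain i where i: "i < Suc (Suc k)" "y i" using Suc.prems by blast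
      then obtain j where j: "i = Suc j" using y0 by (cases i) auto
      have "tau y j = y i" using y0 False by (simp add: tau_def shift_def j)
      then show ?thesis using i j by auto
    qed
  qed
  then have "(tau ^^ k) (tau y) 0" by (rule Suc.IH)
  then show ?case by (simp only: funpow_Suc_right comp_apply)
qed

definition cmap :: "bool list \<Rightarrow> cantor \<Rightarrow> cantor" where
  "cmap u = xorm [False, True] \<circ> sig \<circ> xorm [True] \<circ> (tau ^^ (length u - 1)) \<circ> xorm u"

lemma cmap_RG: "cmap u \<in> carrier RG"
proof -
  have "xorm [False, True] \<otimes>\<^bsub>RG\<^esub> sig \<otimes>\<^bsub>RG\<^esub> xorm [True] \<otimes>\<^bsub>RG\<^esub> (tau ^^ (length u - 1)) \<otimes>\<^bsub>RG\<^esub> xorm u \<in> carrier RG"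
    using xorm_RG sig_RG tau_pow_RG by simp
  then show ?thesis by (simp add: cmap_def mult_RG)
qed

lemma cmap_01:
  assumes u: "u \<noteq> []" and x: "\<not> prefixof u x"
  shows "In01 (cmap u x)"
proof -
  define y1 where "y1 = xorm u x"
  have "\<not> (\<forall>i<length u. \<not> y1 i)"
    using x by (auto simp: y1_def xorm_def prefixof_def)
  moreover have "Suc (length u - 1) = length u" using u by simp
  ultimately have y2: "(tau ^^ (length u - 1)) y1 0" using tau_pow_1[of "length u - 1" y1] by simp
  define y3 where "y3 = xorm [True] ((tau ^^ (length u - 1)) y1)"
  have y3: "\<not> y3 0" using y2 by (simp add: y3_def xorm_def)
  have "sig y3 0 = False" "sig y3 1 = False" using y3 by (simp_all add: sig_def app_def)
  then show ?thesis by (simp add: cmap_def y1_def y3_def In01_def xorm_def)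
qed

lemma derived_normal: "x \<in> carrier RG \<Longrightarrow> h \<in> derived RG (carrier RG) \<Longrightarrow> x \<otimes>\<^bsub>RG\<^esub> h \<otimes>\<^bsub>RG\<^esub> inv\<^bsub>RG\<^esub> x \<in> derived RG (carrier RG)"
  by (rule normal.inv_op_closed2[OF RG.derived_self_is_normal])

lemma small_derived:
  assumes f: "f \<in> carrier RG" and ss: "small_support f"
  shows "f \<in> derived RG (carrier RG)"
proof -
  obtain E where E: "open E" "closed E" "E \<noteq> {}" "E \<noteq> UNIV" "\<And>x. x \<notin> E \<Longrightarrow> f x = x"
    using ss unfolding small_support_def by blast
  obtain p where p: "p \<notin> E" using E(4) by blast
  have "open (- E)" using E(2) by (simp add: open_Compl)
  then obtain n where n: "{y. agree n p y} \<subseteq> - E" using open_nbhd[of "- E" p] p by blast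
  define u where "u = pre p (Suc n)"
  have u: "u \<noteq> []" by (simp add: u_def pre_def)
  have uE: "\<not> prefixof u y" if "y \<in> E" for y
  proof
    assume "prefixof u y"
    then have "agree n p y" by (simp add: u_def prefixof_def agree_def)
    then show False using n that by blast
  qed
  define c where "c = cmap u"
  have c: "c \<in> carrier RG" by (simp add: c_def cmap_RG)
  define F where "F = c \<otimes>\<^bsub>RG\<^esub> f \<otimes>\<^bsub>RG\<^esub> inv\<^bsub>RG\<^esub> c"
  have Fc: "F \<in> carrier RG" using c f by (simp add: F_def)
  define ic where "ic = inv\<^bsub>RG\<^esub> c"
  have ci: "\<And>x. c (ic x) = x" "\<And>x. ic (c x) = x"
    using inv_RG_apply[OF c] by (auto simp: ic_def)
  have Fapp: "F y = c (f (ic y))" for y by (simp add: F_def mult_RG ic_def)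
  have supp: "F y = y" if "\<not> In01 y" for y
  proof -
    define z where "z = ic y"
    have cz: "c z = y" by (simp add: z_def ci)
    have "z \<notin> E"
    proof
      assume "z \<in> E"
      then have "In01 (cmap u z)" using cmap_01[OF u uE] by blast
      then show False using that cz by (simp add: c_def)
    qed
    then have "f z = z" by (rule E(5))
    then show ?thesis by (simp add: Fapp z_def[symmetric] cz)
  qed
  have Fd: "F \<in> derived RG (carrier RG)" using comm_01[OF Fc supp] .
  have icc: "inv\<^bsub>RG\<^esub> c \<in> carrier RG" using c by simp
  have "inv\<^bsub>RG\<^esub> c \<otimes>\<^bsub>RG\<^esub> F \<otimes>\<^bsub>RG\<^esub> inv\<^bsub>RG\<^esub> (inv\<^bsub>RG\<^esub> c) \<in> derived RG (carrier RG)"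
    using derived_normal[OF icc Fd] .
  moreover have "inv\<^bsub>RG\<^esub> c \<otimes>\<^bsub>RG\<^esub> F \<otimes>\<^bsub>RG\<^esub> inv\<^bsub>RG\<^esub> (inv\<^bsub>RG\<^esub> c) = f"
  proof -
    have iic: "inv\<^bsub>RG\<^esub> ic = c" using c by (simp add: ic_def)
    show ?thesis unfolding ic_def[symmetric] iic by (simp add: mult_RG fun_eq_iff Fapp ci)
  qed
  ultimately show ?thesis by simp
qed

lemma open_pre: "open {y. P (pre y n)}"
proof (rule iffD2[OF open_subopen], intro ballI)
  fix y assume y: "y \<in> {y. P (pre y n)}"
  have "{z. agree n y z} \<subseteq> {y. P (pre y n)}"
  proof
    fix z assume "z \<in> {z. agree n y z}"
    then have "pre y n = pre z n" by (simp add: agree_pre)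
    then show "z \<in> {y. P (pre y n)}" using y by simp
  qed
  moreover have "y \<in> {z. agree n y z}" by (simp add: agree_def)
  ultimately show "\<exists>T. open T \<and> y \<in> T \<and> T \<subseteq> {y. P (pre y n)}" using open_agree by blast
qed

lemma closed_pre: "closed {y. P (pre y n)}"
proof -
  have "- {y. P (pre y n)} = {y. \<not> P (pre y n)}" by auto
  then show ?thesis using open_pre[of "\<lambda>w. \<not> P w" n] by (simp add: closed_def)
qed

lemma agree_pre_iff: "agree n x y \<longleftrightarrow> pre x n = pre y n"
  by (auto simp: agree_def pre_def)

lemma gen_small:
  assumes f: "f \<in> carrier RG"
  shows "f \<in> generate RG {f \<in> carrier RG. small_support f}"
proof (cases "f = id")
  case True
  then show ?thesis using generate.one[of RG] by (simp add: one_RG)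
next
  case False
  define g where "g = inv\<^bsub>RG\<^esub> f"
  have gc: "g \<in> carrier RG" using f by (simp add: g_def)
  have fg: "\<And>x. f (g x) = x" and gf: "\<And>x. g (f x) = x"
    using inv_RG_apply[OF f] by (simp_all add: g_def)
  obtain x0 where "f x0 \<noteq> x0" using False by (auto simp: fun_eq_iff)
  then obtain d where d: "f x0 d \<noteq> x0 d" by (auto simp: fun_eq_iff)
  obtain M where M: "\<And>a b. agree M a b \<Longrightarrow> agree (Suc d) (f a) (f b)"
    using unif_cont[OF RG_cont[OF f]] by blast
  define n where "n = max M (Suc (Suc d))"
  have nM: "M \<le> n" and nd: "Suc (Suc d) \<le> n" by (simp_all add: n_def)
  define v where "v = pre x0 n"
  obtain L2 where L2: "\<And>a b. agree L2 a b \<Longrightarrow> agree n (g a) (g b)"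
    using unif_cont[OF RG_cont[OF gc]] by blast
  define L where "L = Suc L2"
  have L1: "1 \<le> L" by (simp add: L_def)
  define Wp where "Wp = (\<lambda>w. pre (g (app w zeros)) n = v)"
  have Wchar: "pre (g y) n = v \<longleftrightarrow> Wp (pre y L)" for y
  proof -
    have "agree L2 y (app (pre y L) zeros)" by (simp add: agree_def L_def)
    then have "agree n (g y) (g (app (pre y L) zeros))" by (rule L2)
    then show ?thesis by (simp add: Wp_def agree_pre_iff)
  qed
  have V1: "pre (f y) n \<noteq> v" if "pre y n = v" for y
  proof
    assume a: "pre (f y) n = v"
    have "agree n x0 y" using that by (simp add: agree_pre_iff v_def)
    then have "agree M x0 y" using nM by (rule agree_mono)
    then have "f x0 d = f y d" using M by (simp add: agree_def)
    moreover have "f y d = x0 d"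
    proof -
      have "d < n" using nd by simp
      then have "pre (f y) n ! d = v ! d" using a by simp
      then show ?thesis using \<open>d < n\<close> by (simp add: v_def)
    qed
    ultimately show False using d by simp
  qed
  define h where "h = (\<lambda>y. if (\<lambda>w. w = v) (pre y n) then f y else (\<lambda>y. if Wp (pre y L) then g y else id y) y)"
  have rh: "rational_map h"
  proof -
    have rg: "rational_map g" using gc by (simp add: in_RG)
    have r2: "rational_map (\<lambda>y. if Wp (pre y L) then g y else id y)"
      by (rule rational_piecewise[OF rg rational_id L1])
    have r1: "rational_map f" using f by (simp add: in_RG)
    have n1: "1 \<le> n" using nd by simp
    show ?thesis unfolding h_def by (rule rational_piecewise[OF r1 r2 n1])
  qed
  have hA: "h y = f y" if "pre y n = v" for y using that by (simp add: h_def)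
  have hB: "h y = g y" if "pre y n \<noteq> v" "Wp (pre y L)" for y using that by (simp add: h_def)
  have hC: "h y = y" if "pre y n \<noteq> v" "\<not> Wp (pre y L)" for y using that by (simp add: h_def)
  have hh: "h (h y) = y" for y
  proof (cases "pre y n = v")
    case True
    have "Wp (pre (f y) L)" using Wchar[of "f y"] True by (simp add: gf)
    then show ?thesis using True V1[OF True] by (simp add: hA hB gf)
  next
    case F1: False
    show ?thesis
    proof (cases "Wp (pre y L)")
      case True
      then have "pre (g y) n = v" using Wchar by simp
      then show ?thesis using F1 True by (simp add: hA hB fg)
    next
      case False then show ?thesis using F1 by (simp add: hC)
    qed
  qed
  have hc: "h \<in> carrier RG" using mk_RG[OF rh rh hh hh] by simp
  define z where "z = x0 (n - 1 := \<not> x0 (n - 1))"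
  have zV: "pre z n \<noteq> v"
  proof
    assume "pre z n = v"
    then have "pre z n ! (n - 1) = v ! (n - 1)" by simp
    then show False using nd by (simp add: z_def v_def)
  qed
  have zW: "\<not> Wp (pre z L)"
  proof
    assume "Wp (pre z L)"
    then have "pre (g z) n = v" using Wchar by simp
    then have "agree n x0 (g z)" by (simp add: agree_pre_iff v_def)
    then have "agree M x0 (g z)" using nM by (rule agree_mono)
    then have "agree (Suc d) (f x0) (f (g z))" by (rule M)
    then have "f x0 d = z d" using fg[of z] by (simp add: agree_def)
    moreover have "z d = x0 d" using nd by (simp add: z_def)
    ultimately show False using d by simp
  qed
  have x0V: "pre x0 n = v" by (simp add: v_def)
  have sh: "small_support h"
    unfolding small_support_def
  proof (intro exI[of _ "{y. pre y n = v} \<union> {y. Wp (pre y L)}"] conjI allI impI)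
    show "open ({y. pre y n = v} \<union> {y. Wp (pre y L)})"
      using open_pre[of "\<lambda>w. w = v" n] open_pre[of Wp L] by (rule open_Un)
    show "closed ({y. pre y n = v} \<union> {y. Wp (pre y L)})"
      using closed_pre[of "\<lambda>w. w = v" n] closed_pre[of Wp L] by (rule closed_Un)
    show "{y. pre y n = v} \<union> {y. Wp (pre y L)} \<noteq> {}" using x0V by blast
    show "{y. pre y n = v} \<union> {y. Wp (pre y L)} \<noteq> UNIV" using zV zW by blast
    fix y assume "y \<notin> {y. pre y n = v} \<union> {y. Wp (pre y L)}"
    then show "h y = y" by (simp add: hC)
  qed
  have hf: "h \<otimes>\<^bsub>RG\<^esub> f \<in> carrier RG" using hc f by simp
  have shf: "small_support (h \<otimes>\<^bsub>RG\<^esub> f)"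
    unfolding small_support_def
  proof (intro exI[of _ "{y. pre y n \<noteq> v}"] conjI allI impI)
    show "open {y. pre y n \<noteq> v}" by (rule open_pre)
    show "closed {y. pre y n \<noteq> v}" by (rule closed_pre)
    show "{y. pre y n \<noteq> v} \<noteq> {}" using zV by blast
    show "{y. pre y n \<noteq> v} \<noteq> UNIV" using x0V by blast
    fix y assume "y \<notin> {y. pre y n \<noteq> v}"
    then have y: "pre y n = v" by simp
    have "Wp (pre (f y) L)" using Wchar[of "f y"] y by (simp add: gf)
    then have "h (f y) = y" using V1[OF y] by (simp add: hB gf)
    then show "(h \<otimes>\<^bsub>RG\<^esub> f) y = y" by (simp add: mult_RG)
  qed
  have "h \<otimes>\<^bsub>RG\<^esub> (h \<otimes>\<^bsub>RG\<^esub> f) = f" by (simp add: mult_RG fun_eq_iff hh)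
  moreover have "h \<otimes>\<^bsub>RG\<^esub> (h \<otimes>\<^bsub>RG\<^esub> f) \<in> generate RG {f \<in> carrier RG. small_support f}"
    using hc sh hf shf by (intro generate.eng generate.incl) simp_all
  ultimately show ?thesis by simp
qed

theorem proposition2p8:
  shows "group RG
    \<and> generate RG {f \<in> carrier RG. small_support f} = carrier RG
    \<and> derived RG (carrier RG) = carrier RG"
proof (intro conjI)
  show "group RG" by (rule group_RG)
  have gen: "generate RG {f \<in> carrier RG. small_support f} = carrier RG"
  proof
    show "generate RG {f \<in> carrier RG. small_support f} \<subseteq> carrier RG"
      by (rule RG.generate_incl) blast
    show "carrier RG \<subseteq> generate RG {f \<in> carrier RG. small_support f}"
      using gen_small by blast
  qed
  then show "generate RG {f \<in> carrier RG. small_support f} = carrier RG" .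
  show "derived RG (carrier RG) = carrier RG"
  proof
    show "derived RG (carrier RG) \<subseteq> carrier RG" by (rule RG.derived_in_carrier) simp
    have "generate RG {f \<in> carrier RG. small_support f} \<subseteq> derived RG (carrier RG)"
      by (rule RG.generate_subgroup_incl) (auto intro: small_derived RG.derived_is_subgroup)
    then show "carrier RG \<subseteq> derived RG (carrier RG)" using gen by simp
  qed
qed

end
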